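(* Assume the standing hypotheses and definitions in the context. Then $G(t,H(t,x))=x$ for all $t\in\mathbb{R}$ and $x\in\mathbb{R}^n$.
   Context: Standing hypotheses: $A:\mathbb{R}\to\mathbb{R}^{n\times n}$ is continuous and bounded, $T(t,s)$ is the evolution operator of $x'=A(t)x$. $\mu:\mathbb{R}\to(0,\infty)$ is an increasing differentiable growth rate: $\mu(0)=1$, $\lim_{t\to-\infty}\mu(t)=0$, $\lim_{t\to+\infty}\mu(t)=+\infty$. The system $x'=A(t)x$ admits an algebraic dichotomy: projections $P(s)$, $Q(s)=I-P(s)$, constants $K,\alpha>0$ with $T(t,s)P(s)=P(t)T(t,s)$, $\|T(t,s)P(s)\|\le K(\mu(t)/\mu(s))^{-\alpha}$ ($t\ge s$), $\|T(t,s)Q(s)\|\le K(\mu(s)/\mu(t))^{-\alpha}$ ($t\le s$). $f:\mathbb{R}\times\mathbb{R}^n\to\mathbb{R}^n$ is continuous, $\|f(t,x)\|\le\beta\mu'(t)\mu^{-1}(t)$, $\|f(t,x_1)-f(t,x_2)\|\le\gamma\mu'(t)\mu^{-1}(t)\|x_1-x_2\|$ for constants $\beta,\gamma\ge0$, and $6K\gamma\alpha^{-1}<1$. $X(t,\tau,\xi)$ (resp. $Y(t,\tau,\xi)$) is the solution of $x'=A(t)x+f(t,x)$ (resp. $x'=A(t)x$) with value $\xi$ at $t=\tau$. $h(t,(\tau,\xi))$ is the unique solution bounded on $\mathbb{R}$ of $Z'=A(t)Z-f(t,X(t,\tau,\xi))$, and $g(t,(\tau,\xi))$ the unique solution bounded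 on $\mathbb{R}$ of $Z'=A(t)Z+f(t,Y(t,\tau,\xi)+Z)$ (both exist and are unique under these hypotheses). Define $H(t,x)=x+h(t,(t,x))$ and $G(t,y)=y+g(t,(t,y))$. *)

theory Defs
  imports "HOL-Analysis.Analysis"
begin

definition opnorm :: "real^'n^'n \<Rightarrow> real" where
  "opnorm M = onorm (\<lambda>x. M *v x)"

definition Ysol :: "(real \<Rightarrow> real^'n^'n) \<Rightarrow> real \<Rightarrow> real^'n \<Rightarrow> real \<Rightarrow> real^'n" where
  "Ysol A \<tau> \<xi> = (THE x. x \<tau> = \<xi> \<and>
      (\<forall>t. (x has_vector_derivative (A t *v x t)) (at t)))"

definition Xsol :: "(real \<Rightarrow> real^'n^'n) \<Rightarrow> (real \<Rightarrow> real^'n \<Rightarrow> real^'n)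
      \<Rightarrow> real \<Rightarrow> real^'n \<Rightarrow> real \<Rightarrow> real^'n" where
  "Xsol A f \<tau> \<xi> = (THE x. x \<tau> = \<xi> \<and>
      (\<forall>t. (x has_vector_derivative (A t *v x t + f t (x t))) (at t)))"

definition hsol :: "(real \<Rightarrow> real^'n^'n) \<Rightarrow> (real \<Rightarrow> real^'n \<Rightarrow> real^'n)
      \<Rightarrow> real \<Rightarrow> real^'n \<Rightarrow> real \<Rightarrow> real^'n" where
  "hsol A f \<tau> \<xi> = (THE z. bounded (range z) \<and>
      (\<forall>t. (z has_vector_derivative (A t *v z t - f t (Xsol A f \<tau> \<xi> t))) (at t)))"

definition gsol :: "(real \<Rightarrow> real^'n^'n) \<Rightarrow> (real \<Rightarrow> real^'n \<Rightarrow> real^'n)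
      \<Rightarrow> real \<Rightarrow> real^'n \<Rightarrow> real \<Rightarrow> real^'n" where
  "gsol A f \<tau> \<xi> = (THE z. bounded (range z) \<and>
      (\<forall>t. (z has_vector_derivative (A t *v z t + f t (Ysol A \<tau> \<xi> t + z t))) (at t)))"

definition Hmap :: "(real \<Rightarrow> real^'n^'n) \<Rightarrow> (real \<Rightarrow> real^'n \<Rightarrow> real^'n)
      \<Rightarrow> real \<Rightarrow> real^'n \<Rightarrow> real^'n" where
  "Hmap A f t x = x + hsol A f t x t"

definition Gmap :: "(real \<Rightarrow> real^'n^'n) \<Rightarrow> (real \<Rightarrow> real^'n \<Rightarrow> real^'n)
      \<Rightarrow> real \<Rightarrow> real^'n \<Rightarrow> real^'n" where
  "Gmap A f t y = y + gsol A f t y t"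

end

theory Submission
  imports Defs
begin

lemma comp_le_norm: "\<bar>(M::real^'n^'m) $ i $ j\<bar> \<le> norm M"
proof -
  have "\<bar>M $ i $ j\<bar> \<le> norm (M $ i)" by (rule component_le_norm_cart)
  also have "\<dots> \<le> norm M" by (rule Finite_Cartesian_Product.norm_nth_le)
  finally show ?thesis .
qed

lemma norm_mv_le: "norm ((M::real^'n^'m) *v v) \<le> norm M * norm v * (real CARD('m) * real CARD('n))"
proof -
  have "\<And>i j. \<bar>M $ i $ j\<bar> \<le> norm M"
    by (rule comp_le_norm)
  then have h1: "onorm ((*v) M) \<le> real CARD('m) * real CARD('n) * norm M"
    by (rule onorm_le_matrix_component)
  have h2: "norm (M *v v) \<le> onorm ((*v) M) * norm v"
    by (rule onorm) simp
  have "norm (M *v v) \<le> (real CARD('m) * real CARD('n) * norm M) * norm v"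
    using h2 mult_right_mono[OF h1 norm_ge_zero[of v]] by linarith
  then show ?thesis by (simp add: algebra_simps)
qed

lemma mv_bilinear: "bounded_bilinear (\<lambda>(M::real^'n^'m) (v::real^'n). M *v v)"
proof (rule bounded_bilinear.intro)
  fix a a' :: "real^'n^'m" and b b' :: "real^'n" and r :: real
  show "(a + a') *v b = a *v b + a' *v b"
    by (simp add: matrix_vector_mult_add_rdistrib)
  show "a *v (b + b') = a *v b + a *v b'"
    by (simp add: matrix_vector_right_distrib)
  show "(r *\<^sub>R a) *v b = r *\<^sub>R (a *v b)"
    by (simp add: vec_eq_iff matrix_vector_mult_def sum_distrib_left algebra_simps)
  show "a *v (r *\<^sub>R b) = r *\<^sub>R (a *v b)"
    by (simp add: vec_eq_iff matrix_vector_mult_def sum_distrib_left algebra_simps)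
next
  show "\<exists>K. \<forall>a b. norm ((a::real^'n^'m) *v b) \<le> norm a * norm b * K"
    using norm_mv_le by blast
qed

lemma norm_mv_opnorm: "norm (M *v v) \<le> opnorm M * norm v"
  unfolding opnorm_def by (rule onorm) simp

lemma energy:
  fixes w :: "real \<Rightarrow> 'a::real_inner"
  assumes st: "s \<le> t"
   and wd: "\<And>u. u \<in> {s..t} \<Longrightarrow> (w has_vector_derivative w' u) (at u)"
   and pd: "\<And>u. u \<in> {s..t} \<Longrightarrow> (\<psi> has_real_derivative \<psi>' u) (at u)"
   and bd: "\<And>u. u \<in> {s..t} \<Longrightarrow> norm (w' u) \<le> \<psi>' u * norm (w u)"
  shows "norm (w t) \<le> exp (\<psi> t - \<psi> s) * norm (w s) \<and> norm (w s) \<le> exp (\<psi> t - \<psi> s) * norm (w t)"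
proof -
  have ip: "((\<lambda>u. w u \<bullet> w u) has_real_derivative 2 * (w u \<bullet> w' u)) (at u)" if "u \<in> {s..t}" for u
  proof -
    have "((\<lambda>u. w u \<bullet> w u) has_vector_derivative (w u \<bullet> w' u + w' u \<bullet> w u)) (at u)"
      using bounded_bilinear.has_vector_derivative[OF bounded_bilinear_inner wd[OF that] wd[OF that]] .
    then show ?thesis
      by (simp add: has_real_derivative_iff_has_vector_derivative inner_commute)
  qed
  have cs: "\<bar>w u \<bullet> w' u\<bar> \<le> \<psi>' u * (w u \<bullet> w u)" if "u \<in> {s..t}" for u
  proof -
    have "\<bar>w u \<bullet> w' u\<bar> \<le> norm (w u) * norm (w' u)" by (rule Cauchy_Schwarz_ineq2)
    also have "\<dots> \<le> norm (w u) * (\<psi>' u * norm (w u))"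
      by (rule mult_left_mono[OF bd[OF that]]) simp
    also have "\<dots> = \<psi>' u * (w u \<bullet> w u)"
      by (simp add: power2_norm_eq_inner[symmetric] power2_eq_square)
    finally show ?thesis .
  qed
  define e1 where "e1 u = (w u \<bullet> w u) * exp (- 2 * \<psi> u)" for u
  define e2 where "e2 u = (w u \<bullet> w u) * exp (2 * \<psi> u)" for u
  have "e1 t \<le> e1 s"
  proof (rule DERIV_nonpos_imp_nonincreasing[OF st])
    fix u assume u: "s \<le> u" "u \<le> t"
    then have uu: "u \<in> {s..t}" by simp
    have "(e1 has_real_derivative 2 * (w u \<bullet> w' u) * exp (- 2 * \<psi> u) + (w u \<bullet> w u) * (exp (- 2 * \<psi> u) * (- 2 * \<psi>' u))) (at u)"
      unfolding e1_def by (rule DERIV_cong[OF DERIV_mult[OF ip[OF uu] DERIV_fun_exp[OF DERIV_cmult[OF pd[OF uu], of "- 2"]]]]) (simp add: algebra_simps)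
    moreover have "2 * (w u \<bullet> w' u) * exp (- 2 * \<psi> u) + (w u \<bullet> w u) * (exp (- 2 * \<psi> u) * (- 2 * \<psi>' u)) \<le> 0"
    proof -
      have "2 * (w u \<bullet> w' u) \<le> 2 * (\<psi>' u * (w u \<bullet> w u))" using cs[OF uu] by linarith
      then have "(2 * (w u \<bullet> w' u) - 2 * \<psi>' u * (w u \<bullet> w u)) * exp (- 2 * \<psi> u) \<le> 0"
        by (intro mult_nonpos_nonneg) auto
      then show ?thesis by (simp add: algebra_simps)
    qed
    ultimately show "\<exists>y. (e1 has_real_derivative y) (at u) \<and> y \<le> 0" by blast
  qed
  have "e2 s \<le> e2 t"
  proof (rule DERIV_nonneg_imp_nondecreasing[OF st])
    fix u assume u: "s \<le> u" "u \<le> t"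
    then have uu: "u \<in> {s..t}" by simp
    have "(e2 has_real_derivative 2 * (w u \<bullet> w' u) * exp (2 * \<psi> u) + (w u \<bullet> w u) * (exp (2 * \<psi> u) * (2 * \<psi>' u))) (at u)"
      unfolding e2_def by (rule DERIV_cong[OF DERIV_mult[OF ip[OF uu] DERIV_fun_exp[OF DERIV_cmult[OF pd[OF uu], of "2"]]]]) (simp add: algebra_simps)
    moreover have "2 * (w u \<bullet> w' u) * exp (2 * \<psi> u) + (w u \<bullet> w u) * (exp (2 * \<psi> u) * (2 * \<psi>' u)) \<ge> 0"
    proof -
      have "2 * (w u \<bullet> w' u) \<ge> - 2 * (\<psi>' u * (w u \<bullet> w u))" using cs[OF uu] by linarith
      then have "(2 * (w u \<bullet> w' u) + 2 * \<psi>' u * (w u \<bullet> w u)) * exp (2 * \<psi> u) \<ge> 0"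
        by (intro mult_nonneg_nonneg) auto
      then show ?thesis by (simp add: algebra_simps)
    qed
    ultimately show "\<exists>y. (e2 has_real_derivative y) (at u) \<and> y \<ge> 0" by blast
  qed
  have n2: "w u \<bullet> w u = (norm (w u))\<^sup>2" for u by (simp add: power2_norm_eq_inner)
  have ex: "exp (2 * x) = (exp x)\<^sup>2" for x :: real by (simp add: power2_eq_square exp_add[symmetric])
  have "(norm (w t))\<^sup>2 \<le> (exp (\<psi> t - \<psi> s) * norm (w s))\<^sup>2"
  proof -
    have "(norm (w t))\<^sup>2 * exp (- 2 * \<psi> t) \<le> (norm (w s))\<^sup>2 * exp (- 2 * \<psi> s)"
      using \<open>e1 t \<le> e1 s\<close> by (simp add: e1_def n2)
    then have "(norm (w t))\<^sup>2 * exp (- 2 * \<psi> t) * exp (2 * \<psi> t) \<le> (norm (w s))\<^sup>2 * exp (- 2 * \<psi> s) * exp (2 * \<psi> t)"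
      by (intro mult_right_mono) auto
    then have "(norm (w t))\<^sup>2 \<le> (norm (w s))\<^sup>2 * exp (2 * (\<psi> t - \<psi> s))"
      by (simp add: mult.assoc exp_add[symmetric] algebra_simps)
    moreover have "(exp (\<psi> t - \<psi> s) * norm (w s))\<^sup>2 = (norm (w s))\<^sup>2 * exp (2 * (\<psi> t - \<psi> s))"
      by (subst ex) (simp add: power_mult_distrib)
    ultimately show ?thesis by simp
  qed
  then have 1: "norm (w t) \<le> exp (\<psi> t - \<psi> s) * norm (w s)"
    by (rule power2_le_imp_le) simp
  have "(norm (w s))\<^sup>2 \<le> (exp (\<psi> t - \<psi> s) * norm (w t))\<^sup>2"
  proof -
    have "(norm (w s))\<^sup>2 * exp (2 * \<psi> s) \<le> (norm (w t))\<^sup>2 * exp (2 * \<psi> t)"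
      using \<open>e2 s \<le> e2 t\<close> by (simp add: e2_def n2)
    then have "(norm (w s))\<^sup>2 * exp (2 * \<psi> s) * exp (- 2 * \<psi> s) \<le> (norm (w t))\<^sup>2 * exp (2 * \<psi> t) * exp (- 2 * \<psi> s)"
      by (intro mult_right_mono) auto
    then have "(norm (w s))\<^sup>2 \<le> (norm (w t))\<^sup>2 * exp (2 * (\<psi> t - \<psi> s))"
      by (simp add: mult.assoc exp_add[symmetric] algebra_simps)
    moreover have "(exp (\<psi> t - \<psi> s) * norm (w t))\<^sup>2 = (norm (w t))\<^sup>2 * exp (2 * (\<psi> t - \<psi> s))"
      by (subst ex) (simp add: power_mult_distrib)
    ultimately show ?thesis by simp
  qed
  then have 2: "norm (w s) \<le> exp (\<psi> t - \<psi> s) * norm (w t)"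
    by (rule power2_le_imp_le) simp
  show ?thesis using 1 2 by blast
qed

locale setting =
  fixes A :: "real \<Rightarrow> real^'n^'n"
    and T :: "real \<Rightarrow> real \<Rightarrow> real^'n^'n"
    and \<mu> :: "real \<Rightarrow> real"
    and P :: "real \<Rightarrow> real^'n^'n"
    and K \<alpha> \<beta> \<gamma> :: real
    and f :: "real \<Rightarrow> real^'n \<Rightarrow> real^'n"
  assumes A_cont: "continuous_on UNIV A"
    and A_bdd: "bounded (range A)"
    and T_init: "\<And>s. T s s = mat 1"
    and T_deriv: "\<And>t s. ((\<lambda>u. T u s) has_vector_derivative (A t ** T t s)) (at t)"
    and mu_pos: "\<And>t. \<mu> t > 0"
    and mu_mono: "mono \<mu>"
    and mu_diff: "\<And>t. \<mu> differentiable (at t)"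
    and mu_bot: "(\<mu> \<longlongrightarrow> 0) at_bot"
    and mu_top: "filterlim \<mu> at_top at_top"
    and P_proj: "\<And>s. P s ** P s = P s"
    and K_pos: "K > 0" and alpha_pos: "\<alpha> > 0"
    and TP_comm: "\<And>t s. T t s ** P s = P t ** T t s"
    and dich_P: "\<And>t s. t \<ge> s \<Longrightarrow>
        opnorm (T t s ** P s) \<le> K * (\<mu> t / \<mu> s) powr (-\<alpha>)"
    and dich_Q: "\<And>t s. t \<le> s \<Longrightarrow>
        opnorm (T t s ** (mat 1 - P s)) \<le> K * (\<mu> s / \<mu> t) powr (-\<alpha>)"
    and f_cont: "continuous_on UNIV (\<lambda>(t, x). f t x)"
    and beta_nn: "\<beta> \<ge> 0" and gamma_nn: "\<gamma> \<ge> 0"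
    and f_bdd: "\<And>t x. norm (f t x) \<le> \<beta> * deriv \<mu> t / \<mu> t"
    and f_lip: "\<And>t x1 x2. norm (f t x1 - f t x2) \<le> \<gamma> * deriv \<mu> t / \<mu> t * norm (x1 - x2)"
    and small: "6 * K * \<gamma> / \<alpha> < 1"
begin

definition ca where "ca = (SOME a. a \<ge> 0 \<and> (\<forall>s x. norm (A s *v x) \<le> a * norm x))"

lemma ca: "ca \<ge> 0" "norm (A s *v x) \<le> ca * norm x"
proof -
  obtain B where B: "\<And>s. norm (A s) \<le> B" using A_bdd by (auto simp: bounded_iff)
  define a where "a = real CARD('n) * real CARD('n) * max B 0"
  have "a \<ge> 0 \<and> (\<forall>s x. norm (A s *v x) \<le> a * norm x)"
  proof (intro conjI allI)
    show "a \<ge> 0" by (simp add: a_def)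
    fix s x
    have "norm (A s *v x) \<le> real CARD('n) * real CARD('n) * norm (A s) * norm x"
      using norm_mv_le[of "A s" x] by (simp add: algebra_simps)
    also have "\<dots> \<le> a * norm x" unfolding a_def
      by (intro mult_right_mono mult_left_mono) (use B[of s] in auto)
    finally show "norm (A s *v x) \<le> a * norm x" .
  qed
  then have "ca \<ge> 0 \<and> (\<forall>s x. norm (A s *v x) \<le> ca * norm x)"
    unfolding ca_def by (rule someI)
  then show "ca \<ge> 0" "norm (A s *v x) \<le> ca * norm x" by auto
qed

abbreviation dm where "dm t \<equiv> deriv \<mu> t"

lemma mu_deriv: "(\<mu> has_real_derivative dm t) (at t)"
  using mu_diff DERIV_deriv_iff_real_differentiable by blast

lemma dm_nonneg: "dm t \<ge> 0"
proof (rule ccontr)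
  assume "\<not> dm t \<ge> 0"
  then have "dm t < 0" by simp
  from DERIV_neg_dec_right[OF mu_deriv this] obtain d where d: "d > 0" "\<And>h. 0 < h \<Longrightarrow> h < d \<Longrightarrow> \<mu> (t + h) < \<mu> t"
    by blast
  have "\<mu> t \<le> \<mu> (t + d/2)" using mu_mono d(1) by (simp add: monoD)
  with d(2)[of "d/2"] d(1) show False by simp
qed

lemma lnmu_deriv: "((\<lambda>t. ln (\<mu> t)) has_real_derivative dm t / \<mu> t) (at t)"
  using DERIV_chain2[OF DERIV_ln[OF mu_pos[of t]] mu_deriv[of t]] by (simp add: divide_inverse mult.commute)

lemma tv_deriv: "((\<lambda>t. T t s *v x) has_vector_derivative A t *v (T t s *v x)) (at t)"
  using bounded_bilinear.has_vector_derivative[OF mv_bilinear T_deriv has_vector_derivative_const[of x]]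
  by (simp add: matrix_vector_mul_assoc)

lemma lin_bound:
  assumes w: "\<And>u. (w has_vector_derivative A u *v w u) (at u)"
  shows "norm (w t) \<le> exp (ca * \<bar>t - s\<bar>) * norm (w s)"
proof -
  have pd: "((\<lambda>u. ca * u) has_real_derivative ca) (at u)" for u
    using DERIV_cmult_Id[of ca u] by (simp add: o_def)
  have bd: "norm (A u *v w u) \<le> ca * norm (w u)" for u by (rule ca(2))
  show ?thesis
  proof (cases "s \<le> t")
    case True
    have "norm (w t) \<le> exp (ca * t - ca * s) * norm (w s)"
      using energy[OF True w pd bd] by (rule conjunct1)
    then show ?thesis using True by (simp add: algebra_simps)
  next
    case False
    then have ts: "t \<le> s" by simp
    have "norm (w t) \<le> exp (ca * s - ca * t) * norm (w s)"
      using energy[OF ts w pd bd] by (rule conjunct2)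
    then show ?thesis using False by (simp add: algebra_simps)
  qed
qed

lemma lin_unique:
  assumes w: "\<And>u. (w has_vector_derivative A u *v w u) (at u)" and "w s = 0"
  shows "w t = 0"
  using lin_bound[OF w, of t s] assms(2) by simp

lemma lin_unique2:
  assumes w1: "\<And>u. (w1 has_vector_derivative A u *v w1 u) (at u)"
    and w2: "\<And>u. (w2 has_vector_derivative A u *v w2 u) (at u)" and "w1 s = w2 s"
  shows "w1 t = w2 t"
proof -
  have "(\<lambda>u. w1 u - w2 u) t = 0"
  proof (rule lin_unique[of _ s])
    fix u show "((\<lambda>u. w1 u - w2 u) has_vector_derivative A u *v (w1 u - w2 u)) (at u)"
      using has_vector_derivative_diff[OF w1 w2] by (simp add: matrix_vector_mult_diff_distrib)
  qed (use assms(3) in simp)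
  then show ?thesis by simp
qed

lemma T_cocycle: "T t s *v (T s r *v x) = T t r *v x"
  by (rule lin_unique2[OF tv_deriv tv_deriv, of s]) (simp add: T_init)

lemma T_inv: "T s r *v (T r s *v x) = x"
  by (simp add: T_cocycle T_init)

lemma T_bound: "norm (T t s *v x) \<le> exp (ca * \<bar>t - s\<bar>) * norm x"
proof -
  have "norm (T t s *v x) \<le> exp (ca * \<bar>t - s\<bar>) * norm (T s s *v x)"
    by (rule lin_bound[OF tv_deriv])
  then show ?thesis by (simp add: T_init)
qed

lemma T_cont1: "continuous_on UNIV (\<lambda>t. T t s *v x)"
  by (intro continuous_at_imp_continuous_on ballI has_vector_derivative_continuous[OF tv_deriv])

lemma T_cont2:
  assumes y: "continuous_on UNIV y"
  shows "continuous_on UNIV (\<lambda>\<sigma>. T t \<sigma> *v y \<sigma>)"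
proof -
  have "isCont (\<lambda>\<sigma>. T \<sigma>0 \<sigma> *v y \<sigma>) \<sigma>0" for \<sigma>0
  proof -
    have lim1: "((\<lambda>\<sigma>. y \<sigma> - T \<sigma> \<sigma>0 *v y \<sigma>0) \<longlongrightarrow> 0) (at \<sigma>0)"
    proof -
      have "((\<lambda>\<sigma>. y \<sigma> - T \<sigma> \<sigma>0 *v y \<sigma>0) \<longlongrightarrow> y \<sigma>0 - T \<sigma>0 \<sigma>0 *v y \<sigma>0) (at \<sigma>0)"
        using y T_cont1[of \<sigma>0 "y \<sigma>0"]
        by (intro tendsto_intros) (auto simp: continuous_on_eq_continuous_at isCont_def)
      then show ?thesis by (simp add: T_init)
    qed
    have ev: "\<forall>\<^sub>F \<sigma> in at \<sigma>0. norm (T \<sigma>0 \<sigma> *v y \<sigma> - y \<sigma>0) \<le> exp ca * norm (y \<sigma> - T \<sigma> \<sigma>0 *v y \<sigma>0)"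
    proof -
      have "\<forall>\<^sub>F \<sigma> in at \<sigma>0. dist \<sigma> \<sigma>0 < 1" by (rule eventually_at_in_open'[of "ball \<sigma>0 1", THEN eventually_mono]) (auto simp: dist_commute)
      then show ?thesis
      proof (rule eventually_mono)
        fix \<sigma> assume d: "dist \<sigma> \<sigma>0 < 1"
        have "T \<sigma>0 \<sigma> *v y \<sigma> - y \<sigma>0 = T \<sigma>0 \<sigma> *v (y \<sigma> - T \<sigma> \<sigma>0 *v y \<sigma>0)"
          by (simp add: matrix_vector_mult_diff_distrib T_inv)
        also have "norm \<dots> \<le> exp (ca * \<bar>\<sigma>0 - \<sigma>\<bar>) * norm (y \<sigma> - T \<sigma> \<sigma>0 *v y \<sigma>0)" by (rule T_bound)
        also have "\<dots> \<le> exp ca * norm (y \<sigma> - T \<sigma> \<sigma>0 *v y \<sigma>0)"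
          using d ca(1) by (intro mult_right_mono) (auto simp: dist_real_def abs_minus_commute mult_left_le)
        finally show "norm (T \<sigma>0 \<sigma> *v y \<sigma> - y \<sigma>0) \<le> exp ca * norm (y \<sigma> - T \<sigma> \<sigma>0 *v y \<sigma>0)" .
      qed
    qed
    have "((\<lambda>\<sigma>. T \<sigma>0 \<sigma> *v y \<sigma> - y \<sigma>0) \<longlongrightarrow> 0) (at \<sigma>0)"
      using Lim_null_comparison[OF ev] tendsto_mult_right_zero[OF tendsto_norm_zero[OF lim1], of "exp ca"]
      by (simp add: mult.commute)
    then have "((\<lambda>\<sigma>. T \<sigma>0 \<sigma> *v y \<sigma>) \<longlongrightarrow> y \<sigma>0) (at \<sigma>0)"
      by (simp add: LIM_zero_iff)
    then show ?thesis by (simp add: isCont_def T_init)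
  qed
  then have c0: "isCont (\<lambda>\<sigma>. T t \<sigma>0 *v (T \<sigma>0 \<sigma> *v y \<sigma>)) \<sigma>0" for \<sigma>0
    by (rule isCont_o2[OF _ matrix_vector_mult_linear_continuous_at])
  show ?thesis
    unfolding continuous_on_eq_continuous_at[OF open_UNIV]
    using c0 by (simp add: T_cocycle)
qed

end

definition Gs :: "real \<Rightarrow> (real \<Rightarrow> 'a::banach) \<Rightarrow> real \<Rightarrow> 'a" where
  "Gs \<tau> g s = integral {\<tau>..s} g - integral {s..\<tau>} g"

lemma Gs_self[simp]: "Gs \<tau> g \<tau> = 0"
  by (simp add: Gs_def)

lemma cont_int: "continuous_on UNIV g \<Longrightarrow> g integrable_on {a..b}" for g :: "real \<Rightarrow> 'a::banach"
  by (rule integrable_continuous_interval) (auto intro: continuous_on_subset)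

lemma Gs_fwd: "\<tau> \<le> s \<Longrightarrow> Gs \<tau> g s = integral {\<tau>..s} g"
  by (cases "\<tau> = s") (auto simp: Gs_def)

lemma Gs_bwd: "s \<le> \<tau> \<Longrightarrow> Gs \<tau> g s = - integral {s..\<tau>} g"
  by (cases "\<tau> = s") (auto simp: Gs_def)

lemma Gs_base:
  fixes g :: "real \<Rightarrow> 'a::banach"
  assumes g: "continuous_on UNIV g" and "c \<le> s" "c \<le> \<tau>"
  shows "Gs \<tau> g s = integral {c..s} g - integral {c..\<tau>} g"
proof (cases "\<tau> \<le> s")
  case True
  have "integral {c..\<tau>} g + integral {\<tau>..s} g = integral {c..s} g"
    by (rule Henstock_Kurzweil_Integration.integral_combine) (use assms True cont_int[OF g] in auto)
  then show ?thesis using True by (simp add: Gs_fwd algebra_simps)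
next
  case False
  have "integral {c..s} g + integral {s..\<tau>} g = integral {c..\<tau>} g"
    by (rule Henstock_Kurzweil_Integration.integral_combine) (use assms False cont_int[OF g] in auto)
  then show ?thesis using False by (simp add: Gs_bwd algebra_simps)
qed

lemma Gs_diff:
  fixes g :: "real \<Rightarrow> 'a::banach"
  assumes g: "continuous_on UNIV g" and rs: "r \<le> s"
  shows "Gs \<tau> g s - Gs \<tau> g r = integral {r..s} g"
proof -
  define c where "c = min r \<tau>"
  have 1: "Gs \<tau> g s = integral {c..s} g - integral {c..\<tau>} g"
    by (rule Gs_base[OF g]) (use rs in \<open>auto simp: c_def\<close>)
  have 2: "Gs \<tau> g r = integral {c..r} g - integral {c..\<tau>} g"
    by (rule Gs_base[OF g]) (auto simp: c_def)
  have 3: "integral {c..r} g + integral {r..s} g = integral {c..s} g"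
    by (rule Henstock_Kurzweil_Integration.integral_combine) (use rs cont_int[OF g] in \<open>auto simp: c_def\<close>)
  show ?thesis
    by (simp only: 1 2 3[symmetric]) (simp add: algebra_simps)
qed

lemma Gs_deriv:
  fixes g :: "real \<Rightarrow> 'a::banach"
  assumes g: "continuous_on UNIV g"
  shows "(Gs \<tau> g has_vector_derivative g s) (at s)"
proof -
  define c where "c = min s \<tau> - 1"
  define b where "b = s + 1"
  have "((\<lambda>u. integral {c..u} g) has_vector_derivative g s) (at s within {c..b})"
    by (rule integral_has_vector_derivative[OF continuous_on_subset[OF g]]) (auto simp: c_def b_def)
  moreover have "at s within {c..b} = at s"
    by (rule at_within_interior) (auto simp: c_def b_def)
  ultimately have "((\<lambda>u. integral {c..u} g - integral {c..\<tau>} g) has_vector_derivative g s) (at s)"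
    by (auto intro!: derivative_eq_intros)
  then show ?thesis
  proof (rule has_vector_derivative_transform_within_open[of _ _ _ "{c<..}"])
    show "open {c<..}" by simp
    show "s \<in> {c<..}" by (simp add: c_def)
    fix y assume "y \<in> {c<..}"
    then show "integral {c..y} g - integral {c..\<tau>} g = Gs \<tau> g y"
      using Gs_base[OF g, of c y \<tau>] by (simp add: c_def)
  qed
qed

lemma Gs_cont:
  fixes g :: "real \<Rightarrow> 'a::banach"
  assumes g: "continuous_on UNIV g"
  shows "continuous_on UNIV (Gs \<tau> g)"
proof (rule continuous_at_imp_continuous_on, intro ballI)
  fix x show "isCont (Gs \<tau> g) x" by (rule has_vector_derivative_continuous[OF Gs_deriv[OF g]])
qed

context setting
begin

lemma TP_v: "T t s *v (P s *v x) = P t *v (T t s *v x)"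
  by (metis TP_comm matrix_vector_mul_assoc)

lemma PP_v: "P s *v (P s *v x) = P s *v x"
  by (metis P_proj matrix_vector_mul_assoc)

lemma dich_Pv: "s \<le> t \<Longrightarrow> norm (T t s *v (P s *v x)) \<le> K * (\<mu> t / \<mu> s) powr (-\<alpha>) * norm x"
  using norm_mv_opnorm[of "T t s ** P s" x] dich_P[of s t] mult_right_mono[OF dich_P[of s t] norm_ge_zero[of x]]
  by (simp add: matrix_vector_mul_assoc)

lemma dich_Qv: "t \<le> s \<Longrightarrow> norm (T t s *v (x - P s *v x)) \<le> K * (\<mu> s / \<mu> t) powr (-\<alpha>) * norm x"
proof -
  assume ts: "t \<le> s"
  have "T t s *v (x - P s *v x) = (T t s ** (mat 1 - P s)) *v x"
    by (simp add: matrix_vector_mul_assoc[symmetric] matrix_vector_mult_diff_rdistrib)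
  then show ?thesis
    using norm_mv_opnorm[of "T t s ** (mat 1 - P s)" x] mult_right_mono[OF dich_Q[OF ts] norm_ge_zero[of x]]
    by simp
qed

lemma vc:
  assumes F: "continuous_on UNIV F"
    and z: "\<And>u. (z has_vector_derivative A u *v z u + F u) (at u)"
  shows "z s = T s r *v z r + T s 0 *v Gs r (\<lambda>\<sigma>. T 0 \<sigma> *v F \<sigma>) s"
proof -
  define g where "g = (\<lambda>\<sigma>. T 0 \<sigma> *v F \<sigma>)"
  have gc: "continuous_on UNIV g" unfolding g_def by (rule T_cont2[OF F])
  define y where "y u = T u r *v z r + T u 0 *v Gs r g u" for u
  have yd: "(y has_vector_derivative A u *v y u + F u) (at u)" for u
  proof -
    have "(y has_vector_derivative A u *v (T u r *v z r) + (T u 0 *v g u + (A u ** T u 0) *v Gs r g u)) (at u)"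
      unfolding y_def
      by (intro has_vector_derivative_add tv_deriv bounded_bilinear.has_vector_derivative[OF mv_bilinear T_deriv Gs_deriv[OF gc]])
    moreover have "T u 0 *v g u = F u" by (simp add: g_def T_inv)
    ultimately show ?thesis
      by (simp add: y_def matrix_vector_right_distrib matrix_vector_mul_assoc[symmetric] algebra_simps)
  qed
  have "(\<lambda>u. z u - y u) s = 0"
  proof (rule lin_unique[of _ r])
    fix u show "((\<lambda>u. z u - y u) has_vector_derivative A u *v (z u - y u)) (at u)"
      using has_vector_derivative_diff[OF z yd] by (simp add: matrix_vector_mult_diff_distrib)
  qed (simp add: y_def T_init)
  then show ?thesis by (simp add: y_def g_def)
qed

lemma int_T0:
  assumes F: "continuous_on UNIV F"
  shows "T s 0 *v integral {a..b} (\<lambda>\<sigma>. T 0 \<sigma> *v F \<sigma>) = integral {a..b} (\<lambda>\<sigma>. T s \<sigma> *v F \<sigma>)"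
proof -
  have "integral {a..b} ((\<lambda>v. T s 0 *v v) \<circ> (\<lambda>\<sigma>. T 0 \<sigma> *v F \<sigma>)) = T s 0 *v integral {a..b} (\<lambda>\<sigma>. T 0 \<sigma> *v F \<sigma>)"
    by (rule integral_linear[OF cont_int[OF T_cont2[OF F]]]) simp
  then show ?thesis by (simp add: o_def T_cocycle)
qed

lemma int_lin:
  fixes F :: "real \<Rightarrow> real^'n" and M :: "real^'n^'n"
  assumes F: "continuous_on UNIV F"
  shows "M *v integral {a..b} F = integral {a..b} (\<lambda>\<sigma>. M *v F \<sigma>)"
proof -
  have "integral {a..b} ((\<lambda>v. M *v v) \<circ> F) = M *v integral {a..b} F"
    by (rule integral_linear[OF cont_int[OF F]]) simp
  then show ?thesis by (simp add: o_def)
qed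

lemma vc_fwd:
  assumes F: "continuous_on UNIV F"
    and z: "\<And>u. (z has_vector_derivative A u *v z u + F u) (at u)" and rs: "r \<le> s"
  shows "z s = T s r *v z r + integral {r..s} (\<lambda>\<sigma>. T s \<sigma> *v F \<sigma>)"
  using vc[OF F z, of s r] Gs_fwd[OF rs, of "\<lambda>\<sigma>. T 0 \<sigma> *v F \<sigma>"] int_T0[OF F] by simp

lemma vc_bwd:
  assumes F: "continuous_on UNIV F"
    and z: "\<And>u. (z has_vector_derivative A u *v z u + F u) (at u)" and rs: "s \<le> r"
  shows "z s = T s r *v z r - integral {s..r} (\<lambda>\<sigma>. T s \<sigma> *v F \<sigma>)"
proof -
  have "T s 0 *v (- integral {s..r} (\<lambda>\<sigma>. T 0 \<sigma> *v F \<sigma>)) = - (T s 0 *v integral {s..r} (\<lambda>\<sigma>. T 0 \<sigma> *v F \<sigma>))"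
    using linear_neg[OF matrix_vector_mul_linear] .
  then show ?thesis
    using vc[OF F z, of s r] Gs_bwd[OF rs, of "\<lambda>\<sigma>. T 0 \<sigma> *v F \<sigma>"] int_T0[OF F] by simp
qed

end

lemma lim_eps_bot:
  fixes g :: "real \<Rightarrow> real"
  assumes "(g \<longlongrightarrow> 0) at_bot" and "\<And>r. r \<le> s \<Longrightarrow> x \<le> g r + y"
  shows "x \<le> y"
proof (rule field_le_epsilon)
  fix e :: real assume e: "0 < e"
  have "\<forall>\<^sub>F r in at_bot. g r < e \<and> r \<le> s"
    by (rule eventually_conj[OF order_tendstoD(2)[OF assms(1) e] eventually_le_at_bot[of s]])
  then obtain r where "g r < e" "r \<le> s"
    using eventually_happens[of _ "at_bot :: real filter"] by auto
  then show "x \<le> y + e" using assms(2)[of r] by linarith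
qed

lemma lim_eps_top:
  fixes g :: "real \<Rightarrow> real"
  assumes "(g \<longlongrightarrow> 0) at_top" and "\<And>r. s \<le> r \<Longrightarrow> x \<le> g r + y"
  shows "x \<le> y"
proof (rule field_le_epsilon)
  fix e :: real assume e: "0 < e"
  have "\<forall>\<^sub>F r in at_top. g r < e \<and> s \<le> r"
    by (rule eventually_conj[OF order_tendstoD(2)[OF assms(1) e] eventually_ge_at_top[of s]])
  then obtain r where "g r < e" "s \<le> r"
    using eventually_happens[of _ "at_top :: real filter"] by auto
  then show "x \<le> y + e" using assms(2)[of r] by linarith
qed

context setting
begin

lemma pw: "(\<mu> a / \<mu> b) powr e = exp (e * (ln (\<mu> a) - ln (\<mu> b)))"
  using mu_pos[of a] mu_pos[of b] by (simp add: powr_def ln_div)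

lemma TPF_cont: "continuous_on UNIV F \<Longrightarrow> continuous_on UNIV (\<lambda>\<sigma>. T s \<sigma> *v (P \<sigma> *v F \<sigma>))"
  using continuous_on_compose2[OF matrix_vector_mult_linear_continuous_on[of UNIV "P s"] T_cont2[of F s]]
  by (simp add: TP_v)

lemma TQF_cont: "continuous_on UNIV F \<Longrightarrow> continuous_on UNIV (\<lambda>\<sigma>. T s \<sigma> *v (F \<sigma> - P \<sigma> *v F \<sigma>))"
proof -
  assume F: "continuous_on UNIV F"
  have "continuous_on UNIV (\<lambda>\<sigma>. T s \<sigma> *v F \<sigma> - T s \<sigma> *v (P \<sigma> *v F \<sigma>))"
    by (rule continuous_on_diff[OF T_cont2[OF F] TPF_cont[OF F]])
  then show ?thesis by (simp add: matrix_vector_mult_diff_distrib)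
qed

lemma intP_bound:
  assumes F: "continuous_on UNIV F" and Fb: "\<And>\<sigma>. norm (F \<sigma>) \<le> c * dm \<sigma> / \<mu> \<sigma>"
    and rr: "r \<le> r'" and rs: "r' \<le> s"
  shows "norm (integral {r..r'} (\<lambda>\<sigma>. T s \<sigma> *v (P \<sigma> *v F \<sigma>)))
     \<le> K * c / \<alpha> * ((\<mu> r' / \<mu> s) powr \<alpha> - (\<mu> r / \<mu> s) powr \<alpha>)"
proof -
  define B where "B \<sigma> = K * c / \<alpha> * exp (\<alpha> * (ln (\<mu> \<sigma>) - ln (\<mu> s)))" for \<sigma>
  define b where "b \<sigma> = K * c * exp (\<alpha> * (ln (\<mu> \<sigma>) - ln (\<mu> s))) * (dm \<sigma> / \<mu> \<sigma>)" for \<sigma>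
  have Bd: "(B has_real_derivative b \<sigma>) (at \<sigma>)" for \<sigma>
    unfolding B_def
    by (rule DERIV_cong[OF DERIV_cmult[OF DERIV_fun_exp[OF DERIV_cmult[OF DERIV_diff[OF lnmu_deriv DERIV_const]]]]])
       (use alpha_pos in \<open>simp add: b_def field_simps\<close>)
  have bint: "(b has_integral B r' - B r) {r..r'}"
    by (rule fundamental_theorem_of_calculus[OF rr])
       (simp add: has_real_derivative_iff_has_vector_derivative[symmetric] has_field_derivative_at_within[OF Bd])
  have "norm (integral {r..r'} (\<lambda>\<sigma>. T s \<sigma> *v (P \<sigma> *v F \<sigma>))) \<le> integral {r..r'} b"
  proof (rule Henstock_Kurzweil_Integration.integral_norm_bound_integral)
    show "(\<lambda>\<sigma>. T s \<sigma> *v (P \<sigma> *v F \<sigma>)) integrable_on {r..r'}" by (rule cont_int[OF TPF_cont[OF F]])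
    show "b integrable_on {r..r'}" using bint by blast
    fix \<sigma> assume \<sigma>: "\<sigma> \<in> {r..r'}"
    have "norm (T s \<sigma> *v (P \<sigma> *v F \<sigma>)) \<le> K * (\<mu> s / \<mu> \<sigma>) powr (-\<alpha>) * norm (F \<sigma>)"
      by (rule dich_Pv) (use \<sigma> rs in auto)
    also have "\<dots> \<le> K * (\<mu> s / \<mu> \<sigma>) powr (-\<alpha>) * (c * dm \<sigma> / \<mu> \<sigma>)"
      by (intro mult_left_mono Fb) (use K_pos in auto)
    also have "\<dots> = b \<sigma>"
      by (simp add: pw b_def algebra_simps)
    finally show "norm (T s \<sigma> *v (P \<sigma> *v F \<sigma>)) \<le> b \<sigma>" .
  qed
  also have "\<dots> = B r' - B r" using bint by blast
  also have "\<dots> = K * c / \<alpha> * ((\<mu> r' / \<mu> s) powr \<alpha> - (\<mu> r / \<mu> s) powr \<alpha>)"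
    by (simp add: B_def pw algebra_simps)
  finally show ?thesis .
qed

lemma intQ_bound:
  assumes F: "continuous_on UNIV F" and Fb: "\<And>\<sigma>. norm (F \<sigma>) \<le> c * dm \<sigma> / \<mu> \<sigma>"
    and rr: "r' \<le> r" and rs: "s \<le> r'"
  shows "norm (integral {r'..r} (\<lambda>\<sigma>. T s \<sigma> *v (F \<sigma> - P \<sigma> *v F \<sigma>)))
     \<le> K * c / \<alpha> * ((\<mu> s / \<mu> r') powr \<alpha> - (\<mu> s / \<mu> r) powr \<alpha>)"
proof -
  define B where "B \<sigma> = - (K * c / \<alpha> * exp (\<alpha> * (ln (\<mu> s) - ln (\<mu> \<sigma>))))" for \<sigma>
  define b where "b \<sigma> = K * c * exp (\<alpha> * (ln (\<mu> s) - ln (\<mu> \<sigma>))) * (dm \<sigma> / \<mu> \<sigma>)" for \<sigma>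
  have Bd: "(B has_real_derivative b \<sigma>) (at \<sigma>)" for \<sigma>
    unfolding B_def
    by (rule DERIV_cong[OF DERIV_minus[OF DERIV_cmult[OF DERIV_fun_exp[OF DERIV_cmult[OF DERIV_diff[OF DERIV_const lnmu_deriv]]]]]])
       (use alpha_pos in \<open>simp add: b_def field_simps\<close>)
  have bint: "(b has_integral B r - B r') {r'..r}"
    by (rule fundamental_theorem_of_calculus[OF rr])
       (simp add: has_real_derivative_iff_has_vector_derivative[symmetric] has_field_derivative_at_within[OF Bd])
  have "norm (integral {r'..r} (\<lambda>\<sigma>. T s \<sigma> *v (F \<sigma> - P \<sigma> *v F \<sigma>))) \<le> integral {r'..r} b"
  proof (rule Henstock_Kurzweil_Integration.integral_norm_bound_integral)
    show "(\<lambda>\<sigma>. T s \<sigma> *v (F \<sigma> - P \<sigma> *v F \<sigma>)) integrable_on {r'..r}" by (rule cont_int[OF TQF_cont[OF F]])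
    show "b integrable_on {r'..r}" using bint by blast
    fix \<sigma> assume \<sigma>: "\<sigma> \<in> {r'..r}"
    have "norm (T s \<sigma> *v (F \<sigma> - P \<sigma> *v F \<sigma>)) \<le> K * (\<mu> \<sigma> / \<mu> s) powr (-\<alpha>) * norm (F \<sigma>)"
      by (rule dich_Qv) (use \<sigma> rs in auto)
    also have "\<dots> \<le> K * (\<mu> \<sigma> / \<mu> s) powr (-\<alpha>) * (c * dm \<sigma> / \<mu> \<sigma>)"
      by (intro mult_left_mono Fb) (use K_pos in auto)
    also have "\<dots> = b \<sigma>"
      by (simp add: pw b_def algebra_simps)
    finally show "norm (T s \<sigma> *v (F \<sigma> - P \<sigma> *v F \<sigma>)) \<le> b \<sigma>" .
  qed
  also have "\<dots> = B r - B r'" using bint by blast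
  also have "\<dots> = K * c / \<alpha> * ((\<mu> s / \<mu> r') powr \<alpha> - (\<mu> s / \<mu> r) powr \<alpha>)"
    by (simp add: B_def pw algebra_simps)
  finally show ?thesis .
qed

end

context setting
begin

lemma powr_swap: "(\<mu> a / \<mu> b) powr (-\<alpha>) = (\<mu> b / \<mu> a) powr \<alpha>"
  by (simp add: pw algebra_simps)

lemma lim_bot: "((\<lambda>r. K * (\<mu> r / \<mu> s) powr \<alpha> * B) \<longlongrightarrow> 0) at_bot"
proof -
  have "((\<lambda>r. \<mu> r / \<mu> s) \<longlongrightarrow> 0 / \<mu> s) at_bot"
    by (intro tendsto_divide mu_bot tendsto_const) (use mu_pos[of s] in simp)
  then have "((\<lambda>r. (\<mu> r / \<mu> s) powr \<alpha>) \<longlongrightarrow> 0) at_bot"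
    by (intro tendsto_zero_powrI[where b = \<alpha>]) (use alpha_pos mu_pos in \<open>auto intro!: always_eventually less_imp_le\<close>)
  from tendsto_mult[OF tendsto_mult[OF tendsto_const this] tendsto_const, of K B] show ?thesis by simp
qed

lemma lim_top: "((\<lambda>r. K * (\<mu> s / \<mu> r) powr \<alpha> * B) \<longlongrightarrow> 0) at_top"
proof -
  have "((\<lambda>r. \<mu> s / \<mu> r) \<longlongrightarrow> 0) at_top"
    by (rule tendsto_divide_0[OF tendsto_const filterlim_at_top_imp_at_infinity[OF mu_top]])
  then have "((\<lambda>r. (\<mu> s / \<mu> r) powr \<alpha>) \<longlongrightarrow> 0) at_top"
    by (intro tendsto_zero_powrI[where b = \<alpha>]) (use alpha_pos mu_pos in \<open>auto intro!: always_eventually less_imp_le\<close>)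
  from tendsto_mult[OF tendsto_mult[OF tendsto_const this] tendsto_const, of K B] show ?thesis by simp
qed

lemma P_part:
  assumes F: "continuous_on UNIV F"
    and dd: "\<And>u. (d has_vector_derivative A u *v d u + F u) (at u)" and rs: "r \<le> s"
  shows "P s *v d s = T s r *v (P r *v d r) + integral {r..s} (\<lambda>\<sigma>. T s \<sigma> *v (P \<sigma> *v F \<sigma>))"
proof -
  have "P s *v d s = P s *v (T s r *v d r) + P s *v integral {r..s} (\<lambda>\<sigma>. T s \<sigma> *v F \<sigma>)"
    by (subst vc_fwd[OF F dd rs]) (simp add: matrix_vector_right_distrib)
  also have "P s *v integral {r..s} (\<lambda>\<sigma>. T s \<sigma> *v F \<sigma>) = integral {r..s} (\<lambda>\<sigma>. P s *v (T s \<sigma> *v F \<sigma>))"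
    by (rule int_lin[OF T_cont2[OF F]])
  finally show ?thesis by (simp add: TP_v)
qed

lemma Q_part:
  assumes F: "continuous_on UNIV F"
    and dd: "\<And>u. (d has_vector_derivative A u *v d u + F u) (at u)" and rs: "s \<le> r"
  shows "d s - P s *v d s = T s r *v (d r - P r *v d r) - integral {s..r} (\<lambda>\<sigma>. T s \<sigma> *v (F \<sigma> - P \<sigma> *v F \<sigma>))"
proof -
  have e1: "d s = T s r *v d r - integral {s..r} (\<lambda>\<sigma>. T s \<sigma> *v F \<sigma>)" by (rule vc_bwd[OF F dd rs])
  have e2: "P s *v d s = T s r *v (P r *v d r) - integral {s..r} (\<lambda>\<sigma>. T s \<sigma> *v (P \<sigma> *v F \<sigma>))"
  proof -
    have "P s *v d s = P s *v (T s r *v d r) - P s *v integral {s..r} (\<lambda>\<sigma>. T s \<sigma> *v F \<sigma>)"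
      by (subst e1) (simp add: matrix_vector_mult_diff_distrib)
    also have "P s *v integral {s..r} (\<lambda>\<sigma>. T s \<sigma> *v F \<sigma>) = integral {s..r} (\<lambda>\<sigma>. P s *v (T s \<sigma> *v F \<sigma>))"
      by (rule int_lin[OF T_cont2[OF F]])
    finally show ?thesis by (simp add: TP_v)
  qed
  have e3: "integral {s..r} (\<lambda>\<sigma>. T s \<sigma> *v (F \<sigma> - P \<sigma> *v F \<sigma>)) =
      integral {s..r} (\<lambda>\<sigma>. T s \<sigma> *v F \<sigma>) - integral {s..r} (\<lambda>\<sigma>. T s \<sigma> *v (P \<sigma> *v F \<sigma>))"
    unfolding matrix_vector_mult_diff_distrib
    by (rule integral_diff[OF cont_int[OF T_cont2[OF F]] cont_int[OF TPF_cont[OF F]]])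
  have m: "T s r *v (d r - P r *v d r) = T s r *v d r - T s r *v (P r *v d r)"
    by (rule matrix_vector_mult_diff_distrib)
  show ?thesis unfolding m e3 by (subst e2, subst e1) (simp add: algebra_simps)
qed

lemma bdd_step:
  assumes F: "continuous_on UNIV F"
    and dd: "\<And>u. (d has_vector_derivative A u *v d u + F u) (at u)"
    and Fb: "\<And>\<sigma>. norm (F \<sigma>) \<le> c * dm \<sigma> / \<mu> \<sigma> * norm (d \<sigma>)" and c: "c \<ge> 0"
    and B: "\<And>s. norm (d s) \<le> B"
  shows "norm (d s) \<le> 2 * K * c / \<alpha> * B"
proof -
  have B0: "B \<ge> 0" using B[of s] norm_ge_zero[of "d s"] by linarith
  have Fb': "norm (F \<sigma>) \<le> (c * B) * dm \<sigma> / \<mu> \<sigma>" for \<sigma>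
  proof -
    have "c * dm \<sigma> / \<mu> \<sigma> \<ge> 0" using c dm_nonneg mu_pos[of \<sigma>] by simp
    then have "c * dm \<sigma> / \<mu> \<sigma> * norm (d \<sigma>) \<le> c * dm \<sigma> / \<mu> \<sigma> * B" by (intro mult_left_mono B)
    then show ?thesis using Fb[of \<sigma>] by (simp add: algebra_simps)
  qed
  have KcB: "K * (c * B) / \<alpha> \<ge> 0" using K_pos c B0 alpha_pos by simp
  have Pb: "norm (P s *v d s) \<le> K * (c * B) / \<alpha>"
  proof (rule lim_eps_bot[OF lim_bot[of s B]])
    fix r assume rs: "r \<le> s"
    have "norm (P s *v d s) \<le> norm (T s r *v (P r *v d r)) + norm (integral {r..s} (\<lambda>\<sigma>. T s \<sigma> *v (P \<sigma> *v F \<sigma>)))"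
      unfolding P_part[OF F dd rs] by (rule norm_triangle_ineq)
    also have "\<dots> \<le> K * (\<mu> s / \<mu> r) powr (-\<alpha>) * B + K * (c * B) / \<alpha> * ((\<mu> s / \<mu> s) powr \<alpha> - (\<mu> r / \<mu> s) powr \<alpha>)"
    proof (rule add_mono)
      show "norm (T s r *v (P r *v d r)) \<le> K * (\<mu> s / \<mu> r) powr (-\<alpha>) * B"
      proof -
        have "norm (T s r *v (P r *v d r)) \<le> K * (\<mu> s / \<mu> r) powr (-\<alpha>) * norm (d r)" by (rule dich_Pv[OF rs])
        also have "\<dots> \<le> K * (\<mu> s / \<mu> r) powr (-\<alpha>) * B" by (rule mult_left_mono[OF B]) (use K_pos in simp)
        finally show ?thesis .
      qed
      show "norm (integral {r..s} (\<lambda>\<sigma>. T s \<sigma> *v (P \<sigma> *v F \<sigma>))) \<le> K * (c * B) / \<alpha> * ((\<mu> s / \<mu> s) powr \<alpha> - (\<mu> r / \<mu> s) powr \<alpha>)"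
        by (rule intP_bound[OF F Fb' rs order_refl])
    qed
    also have "\<dots> \<le> K * (\<mu> r / \<mu> s) powr \<alpha> * B + K * (c * B) / \<alpha>"
    proof -
      have one: "(\<mu> s / \<mu> s) powr \<alpha> = 1" using mu_pos[of s] by simp
      have X0: "(\<mu> r / \<mu> s) powr \<alpha> \<ge> 0" by simp
      have "K * (c * B) / \<alpha> * ((\<mu> s / \<mu> s) powr \<alpha> - (\<mu> r / \<mu> s) powr \<alpha>) = K * (c * B) / \<alpha> * (1 - (\<mu> r / \<mu> s) powr \<alpha>)"
        by (simp only: one)
      also have "\<dots> \<le> K * (c * B) / \<alpha> * 1"
        by (rule mult_left_mono) (use X0 KcB in auto)
      finally have "K * (c * B) / \<alpha> * ((\<mu> s / \<mu> s) powr \<alpha> - (\<mu> r / \<mu> s) powr \<alpha>) \<le> K * (c * B) / \<alpha>"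
        by simp
      then show ?thesis by (simp add: powr_swap)
    qed
    finally show "norm (P s *v d s) \<le> K * (\<mu> r / \<mu> s) powr \<alpha> * B + K * (c * B) / \<alpha>" .
  qed
  have Qb: "norm (d s - P s *v d s) \<le> K * (c * B) / \<alpha>"
  proof (rule lim_eps_top[OF lim_top[of s B]])
    fix r assume rs: "s \<le> r"
    have "norm (d s - P s *v d s) \<le> norm (T s r *v (d r - P r *v d r)) + norm (integral {s..r} (\<lambda>\<sigma>. T s \<sigma> *v (F \<sigma> - P \<sigma> *v F \<sigma>)))"
      unfolding Q_part[OF F dd rs] by (rule norm_triangle_ineq4)
    also have "\<dots> \<le> K * (\<mu> r / \<mu> s) powr (-\<alpha>) * B + K * (c * B) / \<alpha> * ((\<mu> s / \<mu> s) powr \<alpha> - (\<mu> s / \<mu> r) powr \<alpha>)"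
    proof (rule add_mono)
      show "norm (T s r *v (d r - P r *v d r)) \<le> K * (\<mu> r / \<mu> s) powr (-\<alpha>) * B"
      proof -
        have "norm (T s r *v (d r - P r *v d r)) \<le> K * (\<mu> r / \<mu> s) powr (-\<alpha>) * norm (d r)" by (rule dich_Qv[OF rs])
        also have "\<dots> \<le> K * (\<mu> r / \<mu> s) powr (-\<alpha>) * B" by (rule mult_left_mono[OF B]) (use K_pos in simp)
        finally show ?thesis .
      qed
      show "norm (integral {s..r} (\<lambda>\<sigma>. T s \<sigma> *v (F \<sigma> - P \<sigma> *v F \<sigma>))) \<le> K * (c * B) / \<alpha> * ((\<mu> s / \<mu> s) powr \<alpha> - (\<mu> s / \<mu> r) powr \<alpha>)"
        by (rule intQ_bound[OF F Fb' rs order_refl])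
    qed
    also have "\<dots> \<le> K * (\<mu> s / \<mu> r) powr \<alpha> * B + K * (c * B) / \<alpha>"
    proof -
      have one: "(\<mu> s / \<mu> s) powr \<alpha> = 1" using mu_pos[of s] by simp
      have X0: "(\<mu> s / \<mu> r) powr \<alpha> \<ge> 0" by simp
      have "K * (c * B) / \<alpha> * ((\<mu> s / \<mu> s) powr \<alpha> - (\<mu> s / \<mu> r) powr \<alpha>) = K * (c * B) / \<alpha> * (1 - (\<mu> s / \<mu> r) powr \<alpha>)"
        by (simp only: one)
      also have "\<dots> \<le> K * (c * B) / \<alpha> * 1"
        by (rule mult_left_mono) (use X0 KcB in auto)
      finally have "K * (c * B) / \<alpha> * ((\<mu> s / \<mu> s) powr \<alpha> - (\<mu> s / \<mu> r) powr \<alpha>) \<le> K * (c * B) / \<alpha>"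
        by simp
      then show ?thesis by (simp add: powr_swap)
    qed
    finally show "norm (d s - P s *v d s) \<le> K * (\<mu> s / \<mu> r) powr \<alpha> * B + K * (c * B) / \<alpha>" .
  qed
  have "norm (d s) \<le> norm (P s *v d s) + norm (d s - P s *v d s)"
    using norm_triangle_ineq[of "P s *v d s" "d s - P s *v d s"] by simp
  also have "\<dots> \<le> K * (c * B) / \<alpha> + K * (c * B) / \<alpha>" using Pb Qb by linarith
  also have "\<dots> = 2 * K * c / \<alpha> * B" using alpha_pos by (simp add: field_simps)
  finally show ?thesis .
qed

lemma bdd_zero:
  assumes d: "bounded (range d)" and F: "continuous_on UNIV F"
    and dd: "\<And>u. (d has_vector_derivative A u *v d u + F u) (at u)"
    and Fb: "\<And>\<sigma>. norm (F \<sigma>) \<le> c * dm \<sigma> / \<mu> \<sigma> * norm (d \<sigma>)" and c: "c \<ge> 0"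
    and sm: "2 * K * c / \<alpha> < 1"
  shows "d s = 0"
proof -
  define \<theta> where "\<theta> = 2 * K * c / \<alpha>"
  have th: "\<theta> \<ge> 0" "\<theta> < 1" using sm K_pos alpha_pos c by (auto simp: \<theta>_def)
  obtain B0 where B0: "\<And>s. norm (d s) \<le> B0" using d by (auto simp: bounded_iff)
  have it: "\<forall>s. norm (d s) \<le> \<theta> ^ n * B0" for n
  proof (induction n)
    case 0 then show ?case using B0 by simp
  next
    case (Suc n)
    show ?case
    proof
      fix s
      have "norm (d s) \<le> \<theta> * (\<theta> ^ n * B0)"
        unfolding \<theta>_def by (rule bdd_step[OF F dd Fb c]) (use Suc in \<open>simp add: \<theta>_def\<close>)
      then show "norm (d s) \<le> \<theta> ^ Suc n * B0" by (simp add: algebra_simps)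
    qed
  qed
  have "(\<lambda>n. \<theta> ^ n * B0) \<longlonglongrightarrow> 0"
    using tendsto_mult_left_zero[OF LIMSEQ_power_zero[of \<theta>]] th by simp
  then have "norm (d s) \<le> 0"
    by (rule LIMSEQ_le_const) (use it in auto)
  then show ?thesis by simp
qed

end

lemma conv_bound:
  fixes X :: "nat \<Rightarrow> 'a::banach"
  assumes b: "\<And>m n. n \<le> m \<Longrightarrow> norm (X m - X n) \<le> e n" and e: "e \<longlonglongrightarrow> 0"
  shows "convergent X"
proof -
  have "Cauchy X"
  proof (rule CauchyI)
    fix \<epsilon> :: real assume \<epsilon>: "0 < \<epsilon>"
    have "\<forall>\<^sub>F n in sequentially. e n < \<epsilon> / 2"
      by (rule order_tendstoD(2)[OF e]) (use \<epsilon> in simp)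
    then obtain N where N: "\<And>n. n \<ge> N \<Longrightarrow> e n < \<epsilon> / 2" by (auto simp: eventually_sequentially)
    show "\<exists>M. \<forall>m\<ge>M. \<forall>n\<ge>M. norm (X m - X n) < \<epsilon>"
    proof (intro exI allI impI)
      fix m n assume "N \<le> m" "N \<le> n"
      then have "norm (X m - X N) \<le> e N" "norm (X n - X N) \<le> e N" using b by auto
      moreover have "norm (X m - X n) \<le> norm (X m - X N) + norm (X n - X N)"
        using norm_triangle_ineq4[of "X m - X N" "X n - X N"] by simp
      ultimately show "norm (X m - X n) < \<epsilon>" using N[of N] by linarith
    qed
  qed
  then show ?thesis by (rule Cauchy_convergent)
qed

lemma Gs_add:
  fixes f g :: "real \<Rightarrow> 'a::banach"
  assumes "continuous_on UNIV f" "continuous_on UNIV g"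
  shows "Gs \<tau> (\<lambda>\<sigma>. f \<sigma> + g \<sigma>) s = Gs \<tau> f s + Gs \<tau> g s"
  unfolding Gs_def
  using integral_add[OF cont_int[OF assms(1)] cont_int[OF assms(2)], of \<tau> s]
        integral_add[OF cont_int[OF assms(1)] cont_int[OF assms(2)], of s \<tau>]
  by (simp add: algebra_simps)

context setting
begin

lemma Tm_cont: "continuous_on UNIV (\<lambda>t. T t s)"
  by (intro continuous_at_imp_continuous_on ballI has_vector_derivative_continuous[OF T_deriv])

lemma P_cont:
  assumes F: "continuous_on UNIV F"
  shows "continuous_on UNIV (\<lambda>\<sigma>. P \<sigma> *v F \<sigma>)"
proof -
  have "continuous_on UNIV (\<lambda>\<sigma>. T \<sigma> 0 *v (P 0 *v (T 0 \<sigma> *v F \<sigma>)))"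
    by (rule bounded_bilinear.continuous_on[OF mv_bilinear Tm_cont
          continuous_on_compose2[OF matrix_vector_mult_linear_continuous_on[of UNIV "P 0"] T_cont2[OF F]]]) auto
  moreover have "T \<sigma> 0 *v (P 0 *v (T 0 \<sigma> *v F \<sigma>)) = P \<sigma> *v F \<sigma>" for \<sigma>
    by (simp add: TP_v T_inv)
  ultimately show ?thesis by simp
qed

lemma Q_cont:
  assumes F: "continuous_on UNIV F"
  shows "continuous_on UNIV (\<lambda>\<sigma>. F \<sigma> - P \<sigma> *v F \<sigma>)"
  by (intro continuous_on_diff F P_cont)

lemma mu_negn: "(\<lambda>n. \<mu> (- real n)) \<longlonglongrightarrow> 0"
proof -
  have "filterlim (\<lambda>n. - real n) at_bot sequentially"
    by (subst filterlim_uminus_at_bot) (simp add: filterlim_real_sequentially)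
  then show ?thesis by (rule filterlim_compose[OF mu_bot])
qed

lemma mu_posn: "filterlim (\<lambda>n. \<mu> (real n)) at_top sequentially"
  by (rule filterlim_compose[OF mu_top filterlim_real_sequentially])

lemma bdd_exists:
  assumes F: "continuous_on UNIV F" and Fb: "\<And>\<sigma>. norm (F \<sigma>) \<le> b * dm \<sigma> / \<mu> \<sigma>" and b: "b \<ge> 0"
  shows "\<exists>h. bounded (range h) \<and> (\<forall>u. (h has_vector_derivative A u *v h u + F u) (at u))"
proof -
  define g where "g = (\<lambda>\<sigma>. T 0 \<sigma> *v F \<sigma>)"
  define I where "I = (\<lambda>\<sigma>. T 0 \<sigma> *v (P \<sigma> *v F \<sigma>))"
  define J where "J = (\<lambda>\<sigma>. T 0 \<sigma> *v (F \<sigma> - P \<sigma> *v F \<sigma>))"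
  have gc: "continuous_on UNIV g" unfolding g_def by (rule T_cont2[OF F])
  have Ic: "continuous_on UNIV I" unfolding I_def by (rule TPF_cont[OF F])
  have Jc: "continuous_on UNIV J" unfolding J_def by (rule TQF_cont[OF F])
  have gIJ: "g = (\<lambda>\<sigma>. I \<sigma> + J \<sigma>)"
    by (rule ext) (simp add: g_def I_def J_def matrix_vector_right_distrib[symmetric])
  define an where "an n = integral {- real n..0} I" for n
  define bn where "bn n = integral {0..real n} J" for n
  define KB where "KB = K * b / \<alpha>"
  have KB0: "KB \<ge> 0" using K_pos b alpha_pos by (simp add: KB_def)
  have "convergent an"
  proof (rule conv_bound)
    fix m n :: nat assume nm: "n \<le> m"
    have "integral {- real m..- real n} I + integral {- real n..0} I = integral {- real m..0} I"
      by (rule Henstock_Kurzweil_Integration.integral_combine) (use nm cont_int[OF Ic] in auto)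
    then have "an m - an n = integral {- real m..- real n} I" by (simp add: an_def algebra_simps)
    also have "norm \<dots> \<le> KB * ((\<mu> (- real n) / \<mu> 0) powr \<alpha> - (\<mu> (- real m) / \<mu> 0) powr \<alpha>)"
      unfolding I_def KB_def by (rule intP_bound[OF F Fb]) (use nm in auto)
    also have "\<dots> \<le> KB * (\<mu> (- real n) / \<mu> 0) powr \<alpha>"
      using KB0 by (simp add: mult_left_mono)
    finally show "norm (an m - an n) \<le> KB * (\<mu> (- real n) / \<mu> 0) powr \<alpha>" .
  next
    have "(\<lambda>n. \<mu> (- real n) / \<mu> 0) \<longlonglongrightarrow> 0 / \<mu> 0"
      by (intro tendsto_divide mu_negn tendsto_const) (use mu_pos[of 0] in simp)
    then have "(\<lambda>n. (\<mu> (- real n) / \<mu> 0) powr \<alpha>) \<longlonglongrightarrow> 0"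
      by (intro tendsto_zero_powrI[where b = \<alpha>]) (use alpha_pos mu_pos in \<open>auto intro!: always_eventually less_imp_le\<close>)
    from tendsto_mult[OF tendsto_const this, of KB] show "(\<lambda>n. KB * (\<mu> (- real n) / \<mu> 0) powr \<alpha>) \<longlonglongrightarrow> 0" by simp
  qed
  then have anl: "an \<longlonglongrightarrow> lim an" by (simp add: convergent_LIMSEQ_iff)
  have "convergent bn"
  proof (rule conv_bound)
    fix m n :: nat assume nm: "n \<le> m"
    have "integral {0..real n} J + integral {real n..real m} J = integral {0..real m} J"
      by (rule Henstock_Kurzweil_Integration.integral_combine) (use nm cont_int[OF Jc] in auto)
    then have "bn m - bn n = integral {real n..real m} J" by (simp add: bn_def algebra_simps)
    also have "norm \<dots> \<le> KB * ((\<mu> 0 / \<mu> (real n)) powr \<alpha> - (\<mu> 0 / \<mu> (real m)) powr \<alpha>)"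
      unfolding J_def KB_def by (rule intQ_bound[OF F Fb]) (use nm in auto)
    also have "\<dots> \<le> KB * (\<mu> 0 / \<mu> (real n)) powr \<alpha>"
      using KB0 by (simp add: mult_left_mono)
    finally show "norm (bn m - bn n) \<le> KB * (\<mu> 0 / \<mu> (real n)) powr \<alpha>" .
  next
    have "(\<lambda>n. \<mu> 0 / \<mu> (real n)) \<longlonglongrightarrow> 0"
      by (rule tendsto_divide_0[OF tendsto_const filterlim_at_top_imp_at_infinity[OF mu_posn]])
    then have "(\<lambda>n. (\<mu> 0 / \<mu> (real n)) powr \<alpha>) \<longlonglongrightarrow> 0"
      by (intro tendsto_zero_powrI[where b = \<alpha>]) (use alpha_pos mu_pos in \<open>auto intro!: always_eventually less_imp_le\<close>)
    from tendsto_mult[OF tendsto_const this, of KB] show "(\<lambda>n. KB * (\<mu> 0 / \<mu> (real n)) powr \<alpha>) \<longlonglongrightarrow> 0" by simp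
  qed
  then have bnl: "bn \<longlonglongrightarrow> lim bn" by (simp add: convergent_LIMSEQ_iff)
  define h where "h s = T s 0 *v (lim an - lim bn + Gs 0 g s)" for s
  have hd: "(h has_vector_derivative A u *v h u + F u) (at u)" for u
  proof -
    have "(h has_vector_derivative (T u 0 *v (0 + g u) + (A u ** T u 0) *v (lim an - lim bn + Gs 0 g u))) (at u)"
      unfolding h_def
      by (rule bounded_bilinear.has_vector_derivative[OF mv_bilinear T_deriv has_vector_derivative_add[OF has_vector_derivative_const Gs_deriv[OF gc]]])
    moreover have "T u 0 *v g u = F u" by (simp add: g_def T_inv)
    ultimately show ?thesis
      by (simp add: h_def matrix_vector_mul_assoc[symmetric] algebra_simps)
  qed
  have hb: "norm (h s) \<le> 2 * KB" for s
  proof (rule Lim_norm_ubound[OF trivial_limit_sequentially])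
    show "(\<lambda>n. T s 0 *v (an n - bn n + Gs 0 g s)) \<longlonglongrightarrow> h s"
      unfolding h_def
      by (intro bounded_linear.tendsto[OF matrix_vector_mul_bounded_linear] tendsto_intros anl bnl)
    have "\<forall>\<^sub>F n in sequentially. real n \<ge> \<bar>s\<bar>"
      using filterlim_real_sequentially by (simp add: filterlim_at_top)
    then show "\<forall>\<^sub>F n in sequentially. norm (T s 0 *v (an n - bn n + Gs 0 g s)) \<le> 2 * KB"
    proof (rule eventually_mono)
      fix n assume n: "real n \<ge> \<bar>s\<bar>"
      then have s1: "- real n \<le> s" and s2: "s \<le> real n" by auto
      have GI: "Gs 0 I s = integral {- real n..s} I - integral {- real n..0} I"
        by (rule Gs_base[OF Ic]) (use s1 in auto)
      have GJ: "Gs 0 J s = integral {0..real n} J - integral {s..real n} J"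
      proof -
        have "Gs 0 J (real n) - Gs 0 J s = integral {s..real n} J" by (rule Gs_diff[OF Jc s2])
        moreover have "Gs 0 J (real n) = integral {0..real n} J" by (rule Gs_fwd) simp
        ultimately show ?thesis by (simp add: algebra_simps)
      qed
      have X: "an n - bn n + Gs 0 g s = integral {- real n..s} I - integral {s..real n} J"
        unfolding gIJ Gs_add[OF Ic Jc] GI GJ an_def bn_def by (simp add: algebra_simps)
      have e1: "T s 0 *v integral {- real n..s} I = integral {- real n..s} (\<lambda>\<sigma>. T s \<sigma> *v (P \<sigma> *v F \<sigma>))"
        unfolding I_def by (rule int_T0[OF P_cont[OF F]])
      have e2: "T s 0 *v integral {s..real n} J = integral {s..real n} (\<lambda>\<sigma>. T s \<sigma> *v (F \<sigma> - P \<sigma> *v F \<sigma>))"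
        unfolding J_def by (rule int_T0[OF Q_cont[OF F]])
      have eq: "T s 0 *v (an n - bn n + Gs 0 g s) =
          integral {- real n..s} (\<lambda>\<sigma>. T s \<sigma> *v (P \<sigma> *v F \<sigma>)) - integral {s..real n} (\<lambda>\<sigma>. T s \<sigma> *v (F \<sigma> - P \<sigma> *v F \<sigma>))"
        by (simp only: X matrix_vector_mult_diff_distrib[of "T s 0"] e1 e2)
      have n1: "norm (integral {- real n..s} (\<lambda>\<sigma>. T s \<sigma> *v (P \<sigma> *v F \<sigma>))) \<le> KB"
      proof -
        have "norm (integral {- real n..s} (\<lambda>\<sigma>. T s \<sigma> *v (P \<sigma> *v F \<sigma>))) \<le> KB * ((\<mu> s / \<mu> s) powr \<alpha> - (\<mu> (- real n) / \<mu> s) powr \<alpha>)"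
          unfolding KB_def by (rule intP_bound[OF F Fb s1 order_refl])
        also have "\<dots> \<le> KB" using KB0 mu_pos[of s] by (simp add: mult_left_le)
        finally show ?thesis .
      qed
      have n2: "norm (integral {s..real n} (\<lambda>\<sigma>. T s \<sigma> *v (F \<sigma> - P \<sigma> *v F \<sigma>))) \<le> KB"
      proof -
        have "norm (integral {s..real n} (\<lambda>\<sigma>. T s \<sigma> *v (F \<sigma> - P \<sigma> *v F \<sigma>))) \<le> KB * ((\<mu> s / \<mu> s) powr \<alpha> - (\<mu> s / \<mu> (real n)) powr \<alpha>)"
          unfolding KB_def by (rule intQ_bound[OF F Fb s2 order_refl])
        also have "\<dots> \<le> KB" using KB0 mu_pos[of s] by (simp add: mult_left_le)
        finally show ?thesis .
      qed
      show "norm (T s 0 *v (an n - bn n + Gs 0 g s)) \<le> 2 * KB"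
        unfolding eq using norm_triangle_ineq4 n1 n2 by (smt (verit))
    qed
  qed
  have "bounded (range h)"
    unfolding bounded_iff using hb by blast
  then show ?thesis using hd by blast
qed

end

lemma Gs_neg:
  fixes f :: "real \<Rightarrow> 'a::banach"
  assumes "continuous_on UNIV f"
  shows "Gs \<tau> (\<lambda>\<sigma>. - f \<sigma>) s = - Gs \<tau> f s"
  unfolding Gs_def integral_neg by simp

lemma Gs_sub:
  fixes f g :: "real \<Rightarrow> 'a::banach"
  assumes "continuous_on UNIV f" "continuous_on UNIV g"
  shows "Gs \<tau> (\<lambda>\<sigma>. f \<sigma> - g \<sigma>) s = Gs \<tau> f s - Gs \<tau> g s"
proof -
  have "continuous_on UNIV (\<lambda>\<sigma>. - g \<sigma>)" using assms(2) by (rule continuous_on_minus)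
  then have "Gs \<tau> (\<lambda>\<sigma>. f \<sigma> + - g \<sigma>) s = Gs \<tau> f s + Gs \<tau> (\<lambda>\<sigma>. - g \<sigma>) s"
    by (rule Gs_add[OF assms(1)])
  then show ?thesis using Gs_neg[OF assms(2)] by simp
qed

context setting
begin

definition Fn where "Fn \<sigma> x = A \<sigma> *v x + f \<sigma> x"

lemma Fn_cont: "continuous_on UNIV y \<Longrightarrow> continuous_on UNIV (\<lambda>\<sigma>. Fn \<sigma> (y \<sigma>))"
proof -
  assume y: "continuous_on UNIV y"
  have c1: "continuous_on UNIV (\<lambda>\<sigma>. A \<sigma> *v y \<sigma>)"
    by (rule bounded_bilinear.continuous_on[OF mv_bilinear A_cont y])
  have "continuous_on UNIV (\<lambda>\<sigma>. (\<lambda>(t, x). f t x) (\<sigma>, y \<sigma>))"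
    by (rule continuous_on_compose2[OF f_cont]) (auto intro!: continuous_intros y)
  then have c2: "continuous_on UNIV (\<lambda>\<sigma>. f \<sigma> (y \<sigma>))" by simp
  show ?thesis unfolding Fn_def by (rule continuous_on_add[OF c1 c2])
qed

lemma dmmu_nonneg: "dm \<sigma> / \<mu> \<sigma> \<ge> 0"
  using dm_nonneg mu_pos[of \<sigma>] by simp

definition c0 where "c0 = ca + \<beta> + \<gamma> + 1"

lemma c0_pos: "c0 > 0" using ca(1) beta_nn gamma_nn by (simp add: c0_def)

definition Lp where "Lp \<sigma> = c0 * (1 + dm \<sigma> / \<mu> \<sigma>)"

lemma Lp_pos: "Lp \<sigma> > 0"
  using c0_pos dmmu_nonneg[of \<sigma>] by (simp add: Lp_def add_pos_nonneg)

lemma Fn_lip: "norm (Fn \<sigma> x - Fn \<sigma> y) \<le> Lp \<sigma> * norm (x - y)"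
proof -
  have "Fn \<sigma> x - Fn \<sigma> y = A \<sigma> *v (x - y) + (f \<sigma> x - f \<sigma> y)"
    by (simp add: Fn_def matrix_vector_mult_diff_distrib)
  then have "norm (Fn \<sigma> x - Fn \<sigma> y) \<le> ca * norm (x - y) + \<gamma> * dm \<sigma> / \<mu> \<sigma> * norm (x - y)"
    using norm_triangle_ineq[of "A \<sigma> *v (x - y)" "f \<sigma> x - f \<sigma> y"] ca(2)[of \<sigma> "x - y"] f_lip[of \<sigma> x y]
    by simp
  also have "\<dots> = (ca + \<gamma> * (dm \<sigma> / \<mu> \<sigma>)) * norm (x - y)" by (simp add: algebra_simps)
  also have "\<dots> \<le> Lp \<sigma> * norm (x - y)"
  proof (rule mult_right_mono)
    have "\<gamma> * (dm \<sigma> / \<mu> \<sigma>) \<le> c0 * (dm \<sigma> / \<mu> \<sigma>)"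
      by (rule mult_right_mono) (use ca(1) beta_nn dmmu_nonneg in \<open>auto simp: c0_def\<close>)
    then show "ca + \<gamma> * (dm \<sigma> / \<mu> \<sigma>) \<le> Lp \<sigma>"
      using beta_nn gamma_nn by (simp add: Lp_def c0_def algebra_simps)
  qed simp
  finally show ?thesis .
qed

lemma Fn_growth: "norm (Fn \<sigma> x) \<le> Lp \<sigma> * (norm x + 1)"
proof -
  have "norm (Fn \<sigma> x) \<le> ca * norm x + \<beta> * dm \<sigma> / \<mu> \<sigma>"
    using norm_triangle_ineq[of "A \<sigma> *v x" "f \<sigma> x"] ca(2)[of \<sigma> x] f_bdd[of \<sigma> x]
    by (simp add: Fn_def)
  also have "\<dots> \<le> c0 * norm x + c0 * (dm \<sigma> / \<mu> \<sigma>)"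
  proof (rule add_mono)
    show "ca * norm x \<le> c0 * norm x"
      by (rule mult_right_mono) (use beta_nn gamma_nn in \<open>auto simp: c0_def\<close>)
    have "\<beta> * (dm \<sigma> / \<mu> \<sigma>) \<le> c0 * (dm \<sigma> / \<mu> \<sigma>)"
      by (rule mult_right_mono) (use ca(1) gamma_nn dmmu_nonneg in \<open>auto simp: c0_def\<close>)
    then show "\<beta> * dm \<sigma> / \<mu> \<sigma> \<le> c0 * (dm \<sigma> / \<mu> \<sigma>)" by simp
  qed
  also have "\<dots> \<le> Lp \<sigma> * (norm x + 1)"
  proof -
    have q: "dm \<sigma> / \<mu> \<sigma> \<ge> 0" by (rule dmmu_nonneg)
    have "0 \<le> c0 + c0 * (dm \<sigma> / \<mu> \<sigma>) * norm x"
      using c0_pos q by (intro add_nonneg_nonneg mult_nonneg_nonneg) auto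
    moreover have "Lp \<sigma> * (norm x + 1) = c0 * norm x + c0 * (dm \<sigma> / \<mu> \<sigma>) + (c0 + c0 * (dm \<sigma> / \<mu> \<sigma>) * norm x)"
      by (simp add: Lp_def algebra_simps add_divide_distrib)
    ultimately show ?thesis by linarith
  qed
  finally show ?thesis .
qed

definition ps where "ps \<tau> s = c0 * ((s - \<tau>) + (ln (\<mu> s) - ln (\<mu> \<tau>)))"

lemma ps_deriv: "(ps \<tau> has_real_derivative Lp s) (at s)"
  unfolding ps_def Lp_def
  by (rule DERIV_cong[OF DERIV_cmult[OF DERIV_add[OF DERIV_diff[OF DERIV_ident DERIV_const] DERIV_diff[OF lnmu_deriv DERIV_const]]]]) simp

lemma ps_mono: "s \<le> t \<Longrightarrow> ps \<tau> s \<le> ps \<tau> t"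
proof -
  assume st: "s \<le> t"
  have "ln (\<mu> s) \<le> ln (\<mu> t)" using mu_mono st mu_pos by (simp add: monoD)
  then show ?thesis using st c0_pos by (simp add: ps_def)
qed

lemma ps_self[simp]: "ps \<tau> \<tau> = 0" by (simp add: ps_def)

definition om where "om \<tau> s = exp (2 * \<bar>ps \<tau> s\<bar>)"

lemma om_ge1: "om \<tau> s \<ge> 1" by (simp add: om_def)

lemma om_cont: "continuous_on UNIV (om \<tau>)"
proof -
  have "continuous_on UNIV (ps \<tau>)"
    by (intro continuous_at_imp_continuous_on ballI DERIV_isCont[OF ps_deriv])
  then show ?thesis unfolding om_def by (intro continuous_intros)
qed

lemma Gs_wbound:
  assumes k: "continuous_on UNIV k" and D: "D \<ge> 0"
    and kb: "\<And>\<sigma>. norm (k \<sigma>) \<le> D * Lp \<sigma> * om \<tau> \<sigma>"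
  shows "norm (Gs \<tau> k s) \<le> D * (om \<tau> s - 1) / 2"
proof (cases "\<tau> \<le> s")
  case True
  define b where "b \<sigma> = D * Lp \<sigma> * exp (2 * ps \<tau> \<sigma>)" for \<sigma>
  define B where "B \<sigma> = D * exp (2 * ps \<tau> \<sigma>) / 2" for \<sigma>
  have Bd: "(B has_real_derivative b \<sigma>) (at \<sigma>)" for \<sigma>
    unfolding B_def
    by (rule DERIV_cong[OF DERIV_cdivide[OF DERIV_cmult[OF DERIV_fun_exp[OF DERIV_cmult[OF ps_deriv]]]]])
       (simp add: b_def)
  have bint: "(b has_integral B s - B \<tau>) {\<tau>..s}"
    by (rule fundamental_theorem_of_calculus[OF True])
       (simp add: has_real_derivative_iff_has_vector_derivative[symmetric] has_field_derivative_at_within[OF Bd])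
  have "norm (Gs \<tau> k s) = norm (integral {\<tau>..s} k)" by (simp add: Gs_fwd[OF True])
  also have "\<dots> \<le> integral {\<tau>..s} b"
  proof (rule Henstock_Kurzweil_Integration.integral_norm_bound_integral)
    show "k integrable_on {\<tau>..s}" by (rule cont_int[OF k])
    show "b integrable_on {\<tau>..s}" using bint by blast
    fix \<sigma> assume "\<sigma> \<in> {\<tau>..s}"
    then have "ps \<tau> \<sigma> \<ge> 0" using ps_mono[of \<tau> \<sigma> \<tau>] by simp
    then show "norm (k \<sigma>) \<le> b \<sigma>" using kb[of \<sigma>] by (simp add: b_def om_def)
  qed
  also have "\<dots> = B s - B \<tau>" using bint by blast
  also have "\<dots> = D * (om \<tau> s - 1) / 2"
  proof -
    have "ps \<tau> s \<ge> 0" using ps_mono[OF True, of \<tau>] by simp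
    then show ?thesis by (simp add: B_def om_def algebra_simps diff_divide_distrib)
  qed
  finally show ?thesis .
next
  case False
  then have sT: "s \<le> \<tau>" by simp
  define b where "b \<sigma> = D * Lp \<sigma> * exp (- 2 * ps \<tau> \<sigma>)" for \<sigma>
  define B where "B \<sigma> = - (D * exp (- 2 * ps \<tau> \<sigma>) / 2)" for \<sigma>
  have Bd: "(B has_real_derivative b \<sigma>) (at \<sigma>)" for \<sigma>
    unfolding B_def
    by (rule DERIV_cong[OF DERIV_minus[OF DERIV_cdivide[OF DERIV_cmult[OF DERIV_fun_exp[OF DERIV_cmult[OF ps_deriv]]]]]])
       (simp add: b_def)
  have bint: "(b has_integral B \<tau> - B s) {s..\<tau>}"
    by (rule fundamental_theorem_of_calculus[OF sT])
       (simp add: has_real_derivative_iff_has_vector_derivative[symmetric] has_field_derivative_at_within[OF Bd])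
  have "norm (Gs \<tau> k s) = norm (integral {s..\<tau>} k)" by (simp add: Gs_bwd[OF sT])
  also have "\<dots> \<le> integral {s..\<tau>} b"
  proof (rule Henstock_Kurzweil_Integration.integral_norm_bound_integral)
    show "k integrable_on {s..\<tau>}" by (rule cont_int[OF k])
    show "b integrable_on {s..\<tau>}" using bint by blast
    fix \<sigma> assume "\<sigma> \<in> {s..\<tau>}"
    then have "ps \<tau> \<sigma> \<le> 0" using ps_mono[of \<sigma> \<tau> \<tau>] by simp
    then show "norm (k \<sigma>) \<le> b \<sigma>" using kb[of \<sigma>] by (simp add: b_def om_def)
  qed
  also have "\<dots> = B \<tau> - B s" using bint by blast
  also have "\<dots> = D * (om \<tau> s - 1) / 2"
  proof -
    have "ps \<tau> s \<le> 0" using ps_mono[OF sT, of \<tau>] by simp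
    then show ?thesis by (simp add: B_def om_def algebra_simps diff_divide_distrib)
  qed
  finally show ?thesis .
qed

end

context setting
begin

definition ku :: "real \<Rightarrow> (real \<Rightarrow>\<^sub>C (real^'n)) \<Rightarrow> real \<Rightarrow> real^'n" where
  "ku \<tau> u = (\<lambda>\<sigma>. Fn \<sigma> (om \<tau> \<sigma> *\<^sub>R apply_bcontfun u \<sigma>))"

lemma ku_cont: "continuous_on UNIV (ku \<tau> u)"
  unfolding ku_def
  by (rule Fn_cont[OF continuous_on_scaleR[OF om_cont continuous_on_apply_bcontfun]])

lemma ku_bound: "norm (ku \<tau> u \<sigma>) \<le> (norm u + 1) * Lp \<sigma> * om \<tau> \<sigma>"
proof -
  have "norm (ku \<tau> u \<sigma>) \<le> Lp \<sigma> * (norm (om \<tau> \<sigma> *\<^sub>R apply_bcontfun u \<sigma>) + 1)"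
    unfolding ku_def by (rule Fn_growth)
  also have "norm (om \<tau> \<sigma> *\<^sub>R apply_bcontfun u \<sigma>) + 1 \<le> om \<tau> \<sigma> * norm u + om \<tau> \<sigma>"
  proof -
    have "norm (om \<tau> \<sigma> *\<^sub>R apply_bcontfun u \<sigma>) = om \<tau> \<sigma> * norm (apply_bcontfun u \<sigma>)"
      using om_ge1[of \<tau> \<sigma>] by simp
    also have "\<dots> \<le> om \<tau> \<sigma> * norm u"
      by (rule mult_left_mono[OF norm_bounded]) (use om_ge1[of \<tau> \<sigma>] in simp)
    finally show ?thesis using om_ge1[of \<tau> \<sigma>] by linarith
  qed
  then have "Lp \<sigma> * (norm (om \<tau> \<sigma> *\<^sub>R apply_bcontfun u \<sigma>) + 1) \<le> Lp \<sigma> * (om \<tau> \<sigma> * norm u + om \<tau> \<sigma>)"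
    by (rule mult_left_mono) (use Lp_pos[of \<sigma>] in simp)
  also have "\<dots> = (norm u + 1) * Lp \<sigma> * om \<tau> \<sigma>" by (simp add: algebra_simps)
  finally show ?thesis .
qed

lemma om_nz: "om \<tau> s \<noteq> 0" using om_ge1[of \<tau> s] by linarith

definition phif where "phif \<tau> \<xi> u = (\<lambda>s. (1 / om \<tau> s) *\<^sub>R (\<xi> + Gs \<tau> (ku \<tau> u) s))"

lemma phif_mem: "phif \<tau> \<xi> u \<in> bcontfun"
proof (rule bcontfun_normI)
  show "continuous_on UNIV (phif \<tau> \<xi> u)"
    unfolding phif_def
    by (intro continuous_on_scaleR continuous_on_divide continuous_on_const om_cont continuous_on_add Gs_cont ku_cont)
       (simp add: om_nz)
  fix s
  have om1: "om \<tau> s \<ge> 1" by (rule om_ge1)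
  have "norm (Gs \<tau> (ku \<tau> u) s) \<le> (norm u + 1) * (om \<tau> s - 1) / 2"
    by (rule Gs_wbound[OF ku_cont _ ku_bound]) simp
  then have "norm (\<xi> + Gs \<tau> (ku \<tau> u) s) \<le> norm \<xi> + (norm u + 1) * (om \<tau> s - 1) / 2"
    using norm_triangle_ineq[of \<xi> "Gs \<tau> (ku \<tau> u) s"] by linarith
  also have "\<dots> \<le> (norm \<xi> + (norm u + 1) / 2) * om \<tau> s"
  proof -
    have a: "norm \<xi> * 1 \<le> norm \<xi> * om \<tau> s" by (rule mult_left_mono[OF om1 norm_ge_zero])
    have b: "(norm u + 1) * (om \<tau> s - 1) / 2 = (norm u + 1) / 2 * om \<tau> s - (norm u + 1) / 2"
      by (simp add: algebra_simps diff_divide_distrib)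
    have c: "(norm u + 1) / 2 \<ge> 0" by simp
    have d: "(norm \<xi> + (norm u + 1) / 2) * om \<tau> s = norm \<xi> * om \<tau> s + (norm u + 1) / 2 * om \<tau> s"
      by (simp add: distrib_right)
    have "norm \<xi> + (norm u + 1) * (om \<tau> s - 1) / 2 = norm \<xi> + ((norm u + 1) / 2 * om \<tau> s - (norm u + 1) / 2)"
      by (simp only: b)
    also have "\<dots> \<le> norm \<xi> * om \<tau> s + (norm u + 1) / 2 * om \<tau> s"
      using a c by linarith
    also have "\<dots> = (norm \<xi> + (norm u + 1) / 2) * om \<tau> s" by (simp only: d)
    finally show ?thesis .
  qed
  finally have "norm (\<xi> + Gs \<tau> (ku \<tau> u) s) / om \<tau> s \<le> norm \<xi> + (norm u + 1) / 2"
    using om1 by (simp add: divide_le_eq)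
  then show "norm (phif \<tau> \<xi> u s) \<le> norm \<xi> + (norm u + 1) / 2"
    using om1 by (simp add: phif_def)
qed

definition Phi where "Phi \<tau> \<xi> u = Bcontfun (phif \<tau> \<xi> u)"

lemma Phi_apply: "apply_bcontfun (Phi \<tau> \<xi> u) s = (1 / om \<tau> s) *\<^sub>R (\<xi> + Gs \<tau> (ku \<tau> u) s)"
  unfolding Phi_def using Bcontfun_inverse[OF phif_mem] by (simp add: phif_def)

lemma Phi_contr: "dist (Phi \<tau> \<xi> u) (Phi \<tau> \<xi> v) \<le> 1 / 2 * dist u v"
proof (rule dist_bound)
  fix s
  have om1: "om \<tau> s \<ge> 1" by (rule om_ge1)
  have kd: "norm (ku \<tau> u \<sigma> - ku \<tau> v \<sigma>) \<le> dist u v * Lp \<sigma> * om \<tau> \<sigma>" for \<sigma>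
  proof -
    have "norm (ku \<tau> u \<sigma> - ku \<tau> v \<sigma>) \<le> Lp \<sigma> * norm (om \<tau> \<sigma> *\<^sub>R apply_bcontfun u \<sigma> - om \<tau> \<sigma> *\<^sub>R apply_bcontfun v \<sigma>)"
      unfolding ku_def by (rule Fn_lip)
    also have "norm (om \<tau> \<sigma> *\<^sub>R apply_bcontfun u \<sigma> - om \<tau> \<sigma> *\<^sub>R apply_bcontfun v \<sigma>) = om \<tau> \<sigma> * dist (apply_bcontfun u \<sigma>) (apply_bcontfun v \<sigma>)"
      using om_ge1[of \<tau> \<sigma>] by (simp add: dist_norm scaleR_diff_right[symmetric])
    also have "Lp \<sigma> * (om \<tau> \<sigma> * dist (apply_bcontfun u \<sigma>) (apply_bcontfun v \<sigma>)) \<le> Lp \<sigma> * (om \<tau> \<sigma> * dist u v)"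
      by (intro mult_left_mono dist_bounded) (use om_ge1[of \<tau> \<sigma>] Lp_pos[of \<sigma>] in auto)
    finally show ?thesis by (simp add: algebra_simps)
  qed
  have "norm (Gs \<tau> (\<lambda>\<sigma>. ku \<tau> u \<sigma> - ku \<tau> v \<sigma>) s) \<le> dist u v * (om \<tau> s - 1) / 2"
    by (rule Gs_wbound[OF continuous_on_diff[OF ku_cont ku_cont] zero_le_dist kd])
  then have "norm (Gs \<tau> (ku \<tau> u) s - Gs \<tau> (ku \<tau> v) s) \<le> dist u v * (om \<tau> s - 1) / 2"
    by (simp add: Gs_sub[OF ku_cont ku_cont])
  also have "\<dots> \<le> dist u v * om \<tau> s / 2"
    by (simp add: divide_right_mono mult_left_mono)
  finally have ineq: "norm (Gs \<tau> (ku \<tau> u) s - Gs \<tau> (ku \<tau> v) s) / om \<tau> s \<le> dist u v / 2"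
    using om1 by (simp add: divide_le_eq algebra_simps)
  have "dist (apply_bcontfun (Phi \<tau> \<xi> u) s) (apply_bcontfun (Phi \<tau> \<xi> v) s)
      = norm ((1 / om \<tau> s) *\<^sub>R (Gs \<tau> (ku \<tau> u) s - Gs \<tau> (ku \<tau> v) s))"
    by (simp add: Phi_apply dist_norm scaleR_diff_right[symmetric])
  also have "\<dots> = norm (Gs \<tau> (ku \<tau> u) s - Gs \<tau> (ku \<tau> v) s) / om \<tau> s"
    using om1 by simp
  finally show "dist (apply_bcontfun (Phi \<tau> \<xi> u) s) (apply_bcontfun (Phi \<tau> \<xi> v) s) \<le> 1 / 2 * dist u v"
    using ineq by simp
qed

lemma X_exists: "\<exists>x. x \<tau> = \<xi> \<and> (\<forall>t. (x has_vector_derivative A t *v x t + f t (x t)) (at t))"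
proof -
  obtain u where u: "Phi \<tau> \<xi> u = u"
    using banach_fix_type[of "1/2" "Phi \<tau> \<xi>"] Phi_contr by auto
  define x where "x s = om \<tau> s *\<^sub>R apply_bcontfun u s" for s
  have ku_eq: "ku \<tau> u = (\<lambda>\<sigma>. Fn \<sigma> (x \<sigma>))" by (simp add: ku_def x_def)
  have xeq: "x s = \<xi> + Gs \<tau> (\<lambda>\<sigma>. Fn \<sigma> (x \<sigma>)) s" for s
  proof -
    have "x s = om \<tau> s *\<^sub>R apply_bcontfun (Phi \<tau> \<xi> u) s" by (simp add: x_def u)
    also have "\<dots> = \<xi> + Gs \<tau> (ku \<tau> u) s"
      using om_ge1[of \<tau> s] by (simp add: Phi_apply)
    finally show ?thesis by (simp add: ku_eq)
  qed
  have xc: "continuous_on UNIV (\<lambda>\<sigma>. Fn \<sigma> (x \<sigma>))" using ku_cont[of \<tau> u] by (simp add: ku_eq)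
  have xd: "(x has_vector_derivative 0 + Fn t (x t)) (at t)" for t
  proof -
    have d: "((\<lambda>s. \<xi> + Gs \<tau> (\<lambda>\<sigma>. Fn \<sigma> (x \<sigma>)) s) has_vector_derivative 0 + Fn t (x t)) (at t)"
      by (rule has_vector_derivative_add[OF has_vector_derivative_const Gs_deriv[OF xc]])
    show ?thesis by (rule has_vector_derivative_transform[of t UNIV, OF UNIV_I xeq d])
  qed
  then have "(x has_vector_derivative Fn t (x t)) (at t)" for t by simp
  moreover have "x \<tau> = \<xi>" using xeq[of \<tau>] by simp
  ultimately show ?thesis by (auto simp: Fn_def)
qed

lemma X_unique:
  assumes x1: "\<And>t. (x1 has_vector_derivative A t *v x1 t + f t (x1 t)) (at t)"
    and x2: "\<And>t. (x2 has_vector_derivative A t *v x2 t + f t (x2 t)) (at t)"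
    and eq: "x1 \<tau> = x2 \<tau>"
  shows "x1 t = x2 t"
proof -
  define w where "w t = x1 t - x2 t" for t
  define w' where "w' t = (A t *v x1 t + f t (x1 t)) - (A t *v x2 t + f t (x2 t))" for t
  define p where "p t = ca * t + \<gamma> * ln (\<mu> t)" for t
  have wd: "(w has_vector_derivative w' u) (at u)" for u
    unfolding w_def w'_def by (rule has_vector_derivative_diff[OF x1 x2])
  have pd: "(p has_real_derivative (ca + \<gamma> * (dm u / \<mu> u))) (at u)" for u
    unfolding p_def
    by (rule DERIV_add[OF DERIV_cong[OF DERIV_cmult_Id] DERIV_cmult[OF lnmu_deriv]]) simp
  have bd: "norm (w' u) \<le> (ca + \<gamma> * (dm u / \<mu> u)) * norm (w u)" for u
  proof -
    have "w' u = A u *v (x1 u - x2 u) + (f u (x1 u) - f u (x2 u))"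
      by (simp add: w'_def matrix_vector_mult_diff_distrib)
    then have "norm (w' u) \<le> ca * norm (x1 u - x2 u) + \<gamma> * dm u / \<mu> u * norm (x1 u - x2 u)"
      using norm_triangle_ineq[of "A u *v (x1 u - x2 u)" "f u (x1 u) - f u (x2 u)"] ca(2)[of u "x1 u - x2 u"] f_lip[of u "x1 u" "x2 u"]
      by simp
    then show ?thesis by (simp add: w_def algebra_simps)
  qed
  have "norm (w t) = 0"
  proof (cases "\<tau> \<le> t")
    case True
    from energy[OF True wd pd bd] have "norm (w t) \<le> exp (p t - p \<tau>) * norm (w \<tau>)" by (rule conjunct1)
    then show ?thesis using eq by (simp add: w_def)
  next
    case False
    then have t: "t \<le> \<tau>" by simp
    from energy[OF t wd pd bd] have "norm (w t) \<le> exp (p \<tau> - p t) * norm (w \<tau>)" by (rule conjunct2)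
    then show ?thesis using eq by (simp add: w_def)
  qed
  then show ?thesis by (simp add: w_def)
qed

lemma Xsol_prop:
  "Xsol A f \<tau> \<xi> \<tau> = \<xi> \<and> (\<forall>t. (Xsol A f \<tau> \<xi> has_vector_derivative A t *v Xsol A f \<tau> \<xi> t + f t (Xsol A f \<tau> \<xi> t)) (at t))"
proof -
  have "\<exists>!x. x \<tau> = \<xi> \<and> (\<forall>t. (x has_vector_derivative A t *v x t + f t (x t)) (at t))"
  proof (rule ex_ex1I)
    show "\<exists>x. x \<tau> = \<xi> \<and> (\<forall>t. (x has_vector_derivative A t *v x t + f t (x t)) (at t))" by (rule X_exists)
    fix x y
    assume hx: "x \<tau> = \<xi> \<and> (\<forall>t. (x has_vector_derivative A t *v x t + f t (x t)) (at t))"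
      and hy: "y \<tau> = \<xi> \<and> (\<forall>t. (y has_vector_derivative A t *v y t + f t (y t)) (at t))"
    show "x = y"
    proof (rule ext)
      fix t
      have "x \<tau> = y \<tau>" using conjunct1[OF hx] conjunct1[OF hy] by simp
      then show "x t = y t"
        by (rule X_unique[OF conjunct2[OF hx, rule_format] conjunct2[OF hy, rule_format]])
    qed
  qed
  then show ?thesis unfolding Xsol_def by (rule theI')
qed

end

context setting
begin

lemma f_comp_cont: "continuous_on UNIV y \<Longrightarrow> continuous_on UNIV (\<lambda>\<sigma>. f \<sigma> (y \<sigma>))"
proof -
  assume y: "continuous_on UNIV y"
  have "continuous_on UNIV (\<lambda>\<sigma>. (\<lambda>(t, x). f t x) (\<sigma>, y \<sigma>))"
    by (rule continuous_on_compose2[OF f_cont]) (auto intro!: continuous_intros y)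
  then show ?thesis by simp
qed

lemma deriv_cont: "(\<And>t. (y has_vector_derivative y' t) (at t)) \<Longrightarrow> continuous_on UNIV y"
  by (intro continuous_at_imp_continuous_on ballI has_vector_derivative_continuous) auto

lemma bounded_range_diff: "bounded (range u) \<Longrightarrow> bounded (range v) \<Longrightarrow> bounded (range (\<lambda>s. u s - v s))"
  for u v :: "real \<Rightarrow> real^'n"
proof -
  assume "bounded (range u)" "bounded (range v)"
  then obtain B1 B2 where "\<And>s. norm (u s) \<le> B1" "\<And>s. norm (v s) \<le> B2" by (auto simp: bounded_iff)
  then have "\<And>s. norm (u s - v s) \<le> B1 + B2" by (meson add_mono norm_triangle_le_diff)
  then show ?thesis by (auto simp: bounded_iff)
qed

lemma bounded_range_add: "bounded (range u) \<Longrightarrow> bounded (range v) \<Longrightarrow> bounded (range (\<lambda>s. u s + v s))"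
  for u v :: "real \<Rightarrow> real^'n"
proof -
  assume "bounded (range u)" "bounded (range v)"
  then obtain B1 B2 where "\<And>s. norm (u s) \<le> B1" "\<And>s. norm (v s) \<le> B2" by (auto simp: bounded_iff)
  then have "\<And>s. norm (u s + v s) \<le> B1 + B2" by (meson add_mono norm_triangle_le)
  then show ?thesis by (auto simp: bounded_iff)
qed

lemma bounded_range_neg: "bounded (range u) \<Longrightarrow> bounded (range (\<lambda>s. - u s))"
  for u :: "real \<Rightarrow> real^'n"
  by (auto simp: bounded_iff)

lemma main: "Gmap A f t (Hmap A f t x) = x"
proof -
  define X where "X = Xsol A f t x"
  have Xt: "X t = x" and Xd: "\<And>s. (X has_vector_derivative A s *v X s + f s (X s)) (at s)"
    using Xsol_prop[of t x] by (auto simp: X_def)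
  have Xc: "continuous_on UNIV X" by (rule deriv_cont[OF Xd])
  define F where "F = (\<lambda>s. - f s (X s))"
  have Fc: "continuous_on UNIV F" unfolding F_def by (intro continuous_on_minus f_comp_cont Xc)
  have Fb: "norm (F s) \<le> \<beta> * dm s / \<mu> s" for s unfolding F_def using f_bdd by simp
  obtain h where hb: "bounded (range h)" and hd0: "\<And>u. (h has_vector_derivative A u *v h u + F u) (at u)"
    using bdd_exists[OF Fc Fb beta_nn] by blast
  have hd: "(h has_vector_derivative A u *v h u - f u (Xsol A f t x u)) (at u)" for u
    using hd0[of u] by (simp add: F_def X_def)
  have hsol_eq: "hsol A f t x = h"
    unfolding hsol_def
  proof (rule the_equality)
    show "bounded (range h) \<and> (\<forall>u. (h has_vector_derivative A u *v h u - f u (Xsol A f t x u)) (at u))"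
      using hb hd by blast
    fix z assume z: "bounded (range z) \<and> (\<forall>u. (z has_vector_derivative A u *v z u - f u (Xsol A f t x u)) (at u))"
    show "z = h"
    proof (rule ext)
      fix s
      have zd: "(z has_vector_derivative A u *v z u - f u (Xsol A f t x u)) (at u)" for u using z by blast
      have "(\<lambda>u. z u - h u) s = 0"
      proof (rule bdd_zero[where F = "\<lambda>u. 0" and c = 0])
        show "bounded (range (\<lambda>u. z u - h u))" using z hb by (intro bounded_range_diff) auto
        show "continuous_on UNIV (\<lambda>u. 0 :: real^'n)" by simp
        fix u show "((\<lambda>u. z u - h u) has_vector_derivative A u *v (z u - h u) + 0) (at u)"
          using has_vector_derivative_diff[OF zd hd, of u] by (simp add: matrix_vector_mult_diff_distrib)
      qed (use alpha_pos in auto)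
      then show "z s = h s" by simp
    qed
  qed
  define H where "H = x + h t"
  have Hmap_eq: "Hmap A f t x = H" by (simp add: Hmap_def hsol_eq H_def)
  have Yd: "((\<lambda>s. X s + h s) has_vector_derivative A s *v (X s + h s)) (at s)" for s
    using has_vector_derivative_add[OF Xd hd0, of s] by (simp add: F_def matrix_vector_right_distrib)
  have Ysol_eq: "Ysol A t H = (\<lambda>s. X s + h s)"
    unfolding Ysol_def
  proof (rule the_equality)
    show "(\<lambda>s. X s + h s) t = H \<and> (\<forall>s. ((\<lambda>s. X s + h s) has_vector_derivative A s *v (X s + h s)) (at s))"
      using Yd by (simp add: Xt H_def)
    fix y assume y: "y t = H \<and> (\<forall>s. (y has_vector_derivative A s *v y s) (at s))"
    show "y = (\<lambda>s. X s + h s)"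
    proof (rule ext)
      fix s
      show "y s = X s + h s"
        using lin_unique2[of y "\<lambda>s. X s + h s" t s] y Yd by (simp add: Xt H_def)
    qed
  qed
  have hc: "continuous_on UNIV h" by (rule deriv_cont[OF hd0])
  have gd: "((\<lambda>s. - h s) has_vector_derivative A s *v (- h s) + f s (Ysol A t H s + - h s)) (at s)" for s
  proof -
    have "((\<lambda>s. - h s) has_vector_derivative - (A s *v h s + F s)) (at s)"
      by (rule has_vector_derivative_minus[OF hd0])
    moreover have "- (A s *v h s + F s) = A s *v (- h s) + f s (Ysol A t H s + - h s)"
      using linear_neg[OF matrix_vector_mul_linear, of "A s" "h s"] by (simp add: Ysol_eq F_def)
    ultimately show ?thesis by simp
  qed
  have gsol_eq: "gsol A f t H = (\<lambda>s. - h s)"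
    unfolding gsol_def
  proof (rule the_equality)
    show "bounded (range (\<lambda>s. - h s)) \<and> (\<forall>s. ((\<lambda>s. - h s) has_vector_derivative A s *v (- h s) + f s (Ysol A t H s + - h s)) (at s))"
      using bounded_range_neg[OF hb] gd by blast
    fix z assume z: "bounded (range z) \<and> (\<forall>s. (z has_vector_derivative A s *v z s + f s (Ysol A t H s + z s)) (at s))"
    have zd: "(z has_vector_derivative A s *v z s + f s (X s + h s + z s)) (at s)" for s
      using z by (simp add: Ysol_eq)
    define d where "d s = z s + h s" for s
    define G where "G s = f s (X s + d s) - f s (X s)" for s
    have dd: "(d has_vector_derivative A u *v d u + G u) (at u)" for u
    proof -
      have "(d has_vector_derivative (A u *v z u + f u (X u + h u + z u)) + (A u *v h u + F u)) (at u)"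
        unfolding d_def by (rule has_vector_derivative_add[OF zd hd0])
      moreover have "(A u *v z u + f u (X u + h u + z u)) + (A u *v h u + F u) = A u *v d u + G u"
        by (simp add: d_def G_def F_def matrix_vector_right_distrib algebra_simps)
      ultimately show ?thesis by simp
    qed
    have dc: "continuous_on UNIV d" by (rule deriv_cont[OF dd])
    have Gc: "continuous_on UNIV G"
      unfolding G_def by (intro continuous_on_diff f_comp_cont continuous_on_add Xc dc)
    have Gb: "norm (G s) \<le> \<gamma> * dm s / \<mu> s * norm (d s)" for s
      using f_lip[of s "X s + d s" "X s"] by (simp add: G_def)
    have sm2: "2 * K * \<gamma> / \<alpha> < 1"
    proof -
      have "2 * K * \<gamma> / \<alpha> \<le> 6 * K * \<gamma> / \<alpha>"
        using K_pos gamma_nn alpha_pos by (intro divide_right_mono mult_right_mono) auto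
      then show ?thesis using small by linarith
    qed
    show "z = (\<lambda>s. - h s)"
    proof (rule ext)
      fix s
      have "d s = 0"
        by (rule bdd_zero[OF _ Gc dd Gb gamma_nn sm2])
           (unfold d_def, rule bounded_range_add, use z hb in auto)
      then show "z s = - h s" by (simp add: d_def eq_neg_iff_add_eq_0)
    qed
  qed
  show ?thesis
    unfolding Gmap_def Hmap_eq gsol_eq by (simp add: H_def)
qed

end

theorem lemma3p8:
  fixes A :: "real \<Rightarrow> real^'n^'n"
    and T :: "real \<Rightarrow> real \<Rightarrow> real^'n^'n"
    and \<mu> :: "real \<Rightarrow> real"
    and P :: "real \<Rightarrow> real^'n^'n"
    and K \<alpha> \<beta> \<gamma> :: real
    and f :: "real \<Rightarrow> real^'n \<Rightarrow> real^'n"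
  assumes A_cont: "continuous_on UNIV A"
    and A_bdd: "bounded (range A)"
    and T_init: "\<And>s. T s s = mat 1"
    and T_deriv: "\<And>t s. ((\<lambda>u. T u s) has_vector_derivative (A t ** T t s)) (at t)"
    and mu_pos: "\<And>t. \<mu> t > 0"
    and mu_mono: "mono \<mu>"
    and mu_diff: "\<And>t. \<mu> differentiable (at t)"
    and mu_0: "\<mu> 0 = 1"
    and mu_bot: "(\<mu> \<longlongrightarrow> 0) at_bot"
    and mu_top: "filterlim \<mu> at_top at_top"
    and P_proj: "\<And>s. P s ** P s = P s"
    and K_pos: "K > 0" and alpha_pos: "\<alpha> > 0"
    and TP_comm: "\<And>t s. T t s ** P s = P t ** T t s"
    and dich_P: "\<And>t s. t \<ge> s \<Longrightarrow>
        opnorm (T t s ** P s) \<le> K * (\<mu> t / \<mu> s) powr (-\<alpha>)"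
    and dich_Q: "\<And>t s. t \<le> s \<Longrightarrow>
        opnorm (T t s ** (mat 1 - P s)) \<le> K * (\<mu> s / \<mu> t) powr (-\<alpha>)"
    and f_cont: "continuous_on UNIV (\<lambda>(t, x). f t x)"
    and beta_nn: "\<beta> \<ge> 0" and gamma_nn: "\<gamma> \<ge> 0"
    and f_bdd: "\<And>t x. norm (f t x) \<le> \<beta> * deriv \<mu> t / \<mu> t"
    and f_lip: "\<And>t x1 x2. norm (f t x1 - f t x2) \<le> \<gamma> * deriv \<mu> t / \<mu> t * norm (x1 - x2)"
    and small: "6 * K * \<gamma> / \<alpha> < 1"
  shows "\<forall>t x. Gmap A f t (Hmap A f t x) = x"
proof -
  interpret S: setting A T \<mu> P K \<alpha> \<beta> \<gamma> f
    by (rule setting.intro[OF A_cont A_bdd T_init T_deriv mu_pos mu_mono mu_diff mu_bot mu_top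
        P_proj K_pos alpha_pos TP_comm dich_P dich_Q f_cont beta_nn gamma_nn f_bdd f_lip small])
  show ?thesis using S.main by blast
qed

end
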